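(* Fix a strategy $\mathcal{G}$ for the partial feedback game and let $H$ be the random complete history when $\pi\sim\mathcal{S}_{m,n}$ is uniform. Let $0<\varepsilon\le \frac14$. For any card type $i$, if $n$ is sufficiently large in terms of $\varepsilon$ and $m$, then \[\Pr\Big[Y_i(H) > (1+4\varepsilon)\frac{b_i(H)}{n} + \varepsilon^2 m\Big] \le c' \varepsilon^{-2} e^{-c \varepsilon^4 m}\] for some constants $c,c'>0$ depending only on $\varepsilon$.
   Context: $\mathcal{S}_{m,n}$ is the set of words over $[n]$ in which each symbol appears exactly $m$ times (a deck of $mn$ cards). In the partial feedback game the guesser makes guesses $g_1,\dots,g_{mn}\in[n]$ sequentially; after guess $g_t$ they learn only $y_t\in\{0,1\}$, where $y_t=1$ iff $\pi_t=g_t$. A strategy chooses $g_t$ as a function of $(g_1,\dots,g_{t-1},y_1,\dots,y_{t-1})$. A history up to time $s$ is $h_s=((g_r)_{r\le s},(y_r)_{r\le s})$, $H_s$ is the random history up to time $s$, and $H=H_{mn}$. For a history $h_s$, $a_i(h_s)=|\{r\le s:g_r=i\}|$. The $t$-th guess, with $g_t=i$, is called critical if $\varepsilon mn\le a_i(H_{t-1})<(1-\varepsilon)mn$. $b_i(H)$ is the number of critical guesses with $g_t=i$, and $Y_i(H)$ is the number of those that are correct. *)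

theory Defs
  imports "HOL-Probability.Probability"
begin

text \<open>Card types are 0,...,n-1 (standing for [n]). A deck in S_{m,n} is a word of
length m*n over {0..<n} in which every symbol occurs exactly m times.\<close>
definition decks :: "nat \<Rightarrow> nat \<Rightarrow> nat list set" where
  "decks m n = {\<pi>. length \<pi> = m * n \<and> set \<pi> \<subseteq> {..<n} \<and> (\<forall>i<n. count_list \<pi> i = m)}"

text \<open>A history is the list of pairs (g_r, y_r), with y_r = True iff the r-th guess was correct.
A strategy maps the history so far to the next guess.\<close>
type_synonym history = "(nat \<times> bool) list"
type_synonym strategy = "history \<Rightarrow> nat"

fun hist :: "strategy \<Rightarrow> nat list \<Rightarrow> nat \<Rightarrow> history" where
  "hist G \<pi> 0 = []"
| "hist G \<pi> (Suc t) =
     (let h = hist G \<pi> t; g = G h in h @ [(g, g = \<pi> ! t)])"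

definition full_hist :: "strategy \<Rightarrow> nat \<Rightarrow> nat \<Rightarrow> nat list \<Rightarrow> history" where
  "full_hist G m n \<pi> = hist G \<pi> (m * n)"

definition guess_count :: "nat \<Rightarrow> history \<Rightarrow> nat" where
  "guess_count i h = length (filter (\<lambda>(g, y). g = i) h)"

text \<open>The (t+1)-th guess (0-based index t) of H, equal to i, is critical if
  \<epsilon> m n \<le> a_i(H_t) < (1-\<epsilon>) m n.\<close>
definition critical :: "real \<Rightarrow> nat \<Rightarrow> nat \<Rightarrow> nat \<Rightarrow> history \<Rightarrow> nat \<Rightarrow> bool" where
  "critical \<epsilon> m n i H t \<longleftrightarrow> t < length H \<and> fst (H ! t) = i \<and>
     \<epsilon> * real m * real n \<le> real (guess_count i (take t H)) \<and>
     real (guess_count i (take t H)) < (1 - \<epsilon>) * real m * real n"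

definition b_crit :: "real \<Rightarrow> nat \<Rightarrow> nat \<Rightarrow> nat \<Rightarrow> history \<Rightarrow> nat" where
  "b_crit \<epsilon> m n i H = card {t. critical \<epsilon> m n i H t}"

definition Y_crit :: "real \<Rightarrow> nat \<Rightarrow> nat \<Rightarrow> nat \<Rightarrow> history \<Rightarrow> nat" where
  "Y_crit \<epsilon> m n i H = card {t. critical \<epsilon> m n i H t \<and> snd (H ! t)}"

end

theory Submission
  imports Defs "HOL-Analysis.Harmonic_Numbers"
begin

lemma hist_length[simp]: "length (hist G \<pi> t) = t"
  by (induction t) (simp_all add: Let_def)

lemma hist_Suc[simp]: "hist G \<pi> (Suc t) = hist G \<pi> t @ [(G (hist G \<pi> t), G (hist G \<pi> t) = \<pi> ! t)]"
  by (simp add: Let_def)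

declare hist.simps(2)[simp del]

lemma hist_take: "r \<le> t \<Longrightarrow> take r (hist G \<pi> t) = hist G \<pi> r"
proof (induction t)
  case 0 then show ?case by simp
next
  case (Suc t)
  show ?case
  proof (cases "r = Suc t")
    case True then show ?thesis by simp
  next
    case False
    then have "r \<le> t" using Suc.prems by simp
    then show ?thesis using Suc.IH by (simp add: hist_Suc)
  qed
qed

lemma hist_nth: "r < t \<Longrightarrow> hist G \<pi> t ! r = (G (hist G \<pi> r), G (hist G \<pi> r) = \<pi> ! r)"
proof -
  assume "r < t"
  then have "hist G \<pi> t ! r = take (Suc r) (hist G \<pi> t) ! r" by simp
  also have "\<dots> = hist G \<pi> (Suc r) ! r" using \<open>r < t\<close> by (simp add: hist_take)
  also have "\<dots> = (G (hist G \<pi> r), G (hist G \<pi> r) = \<pi> ! r)" by (simp add: hist_Suc nth_append)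
  finally show ?thesis .
qed

lemma hist_cong:
  assumes "\<And>r. r < t \<Longrightarrow> (G (hist G \<pi> r) = \<pi> ! r) = (G (hist G \<pi> r) = \<sigma> ! r)"
  shows "hist G \<sigma> t = hist G \<pi> t"
  using assms
proof (induction t)
  case 0 then show ?case by simp
next
  case (Suc t)
  then have "hist G \<sigma> t = hist G \<pi> t" by simp
  then show ?case using Suc.prems[of t] by (simp add: hist_Suc)
qed

lemma decks_swap:
  assumes "\<sigma> \<in> decks m n" "t < m*n" "s < m*n"
  shows "\<sigma>[t := \<sigma> ! s, s := \<sigma> ! t] \<in> decks m n"
proof -
  have L: "length \<sigma> = m*n" using assms by (simp add: decks_def)
  have M: "mset (\<sigma>[t := \<sigma> ! s, s := \<sigma> ! t]) = mset \<sigma>"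
    using mset_swap[of s \<sigma> t] assms L by simp
  then have "set (\<sigma>[t := \<sigma> ! s, s := \<sigma> ! t]) = set \<sigma>"
    by (metis set_mset_mset)
  moreover have "count_list (\<sigma>[t := \<sigma> ! s, s := \<sigma> ! t]) x = count_list \<sigma> x" for x
    using M by (metis count_mset)
  ultimately show ?thesis using assms L by (simp add: decks_def)
qed

lemma count_list_card: "count_list xs x = card {r. r < length xs \<and> xs ! r = x}"
proof (induction xs rule: rev_induct)
  case Nil then show ?case by simp
next
  case (snoc y xs)
  have "{r. r < length (xs @ [y]) \<and> (xs @ [y]) ! r = x} =
        {r. r < length xs \<and> xs ! r = x} \<union> (if y = x then {length xs} else {})"
    by (auto simp: nth_append less_Suc_eq)
  then show ?case using snoc by (auto simp: card_insert_if)
qed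


definition cnt :: "((nat \<times> bool) \<Rightarrow> bool) \<Rightarrow> history \<Rightarrow> nat" where
  "cnt P h = card {r. r < length h \<and> P (h ! r)}"

lemma decks_len: "\<sigma> \<in> decks m n \<Longrightarrow> length \<sigma> = m*n"
  by (simp add: decks_def)

lemma decks_count: "\<sigma> \<in> decks m n \<Longrightarrow> g < n \<Longrightarrow> card {s. s < m*n \<and> \<sigma> ! s = g} = m"
  using count_list_card[of \<sigma> g] by (simp add: decks_def)

lemma decks_nth_lt: "\<sigma> \<in> decks m n \<Longrightarrow> s < m*n \<Longrightarrow> \<sigma> ! s < n"
proof -
  assume a: "\<sigma> \<in> decks m n" "s < m*n"
  then have "\<sigma> ! s \<in> set \<sigma>" by (simp add: decks_def)
  moreover have "set \<sigma> \<subseteq> {..<n}" using a by (simp add: decks_def)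
  ultimately show ?thesis by blast
qed

lemma finite_decks: "finite (decks m n)"
proof -
  have "decks m n \<subseteq> {xs. set xs \<subseteq> {..<n} \<and> length xs = m*n}" by (auto simp: decks_def)
  moreover have "finite {xs. set xs \<subseteq> {..<n} \<and> length xs = m*n}"
    by (rule finite_lists_length_eq) simp
  ultimately show ?thesis by (rule finite_subset)
qed

context
  fixes G :: strategy and m n t g :: nat and h :: history
  assumes t: "t < m*n"
begin

definition "Cand = {s. s < m*n \<and> (t < s \<or> (s < t \<and> \<not> snd (h!s) \<and> fst (h!s) \<noteq> g))}"
definition "Kset = {r. r < t \<and> h!r = (g,True)}"

lemma cand_card:
  assumes "length h = t"
  shows "card Cand + 1 + cnt (\<lambda>x. fst x = g) h + cnt (\<lambda>x. snd x \<and> fst x \<noteq> g) h = m*n"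
proof -
  let ?Fa = "{r. r < t \<and> fst (h!r) = g}" and ?Fr = "{r. r < t \<and> snd (h!r) \<and> fst (h!r) \<noteq> g}"
  have U: "{..<m*n} = Cand \<union> {t} \<union> ?Fa \<union> ?Fr" using t by (auto simp: Cand_def)
  have "card {..<m*n} = card Cand + card {t} + card ?Fa + card ?Fr"
    unfolding U
    by (subst card_Un_disjoint, simp_all add: Cand_def, auto)+
  then show ?thesis using assms by (simp add: cnt_def)
qed

lemma pos_decomp:
  assumes "\<sigma> \<in> decks m n" "g < n" "hist G \<sigma> t = h"
  shows "card Kset + card (Cand \<inter> {s. \<sigma>!s = g}) + (if \<sigma>!t = g then 1 else 0) = m"
proof -
  have hn: "h ! r = (G (hist G \<sigma> r), G (hist G \<sigma> r) = \<sigma> ! r)" if "r < t" for r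
    using hist_nth[OF that, of G \<sigma>] assms(3) by simp
  have U: "{s. s < m*n \<and> \<sigma> ! s = g} = Kset \<union> (Cand \<inter> {s. \<sigma>!s = g}) \<union> (if \<sigma>!t = g then {t} else {})"
  proof (intro equalityI subsetI)
    fix s assume s: "s \<in> {s. s < m*n \<and> \<sigma> ! s = g}"
    show "s \<in> Kset \<union> (Cand \<inter> {s. \<sigma>!s = g}) \<union> (if \<sigma>!t = g then {t} else {})"
    proof (cases "s < t")
      case True
      then show ?thesis using s hn[OF True] by (auto simp: Kset_def Cand_def)
    qed (use s in \<open>auto simp: Cand_def\<close>)
  next
    fix s assume "s \<in> Kset \<union> (Cand \<inter> {s. \<sigma>!s = g}) \<union> (if \<sigma>!t = g then {t} else {})"
    then show "s \<in> {s. s < m*n \<and> \<sigma> ! s = g}"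
      using t hn by (auto simp: Kset_def Cand_def split: if_splits)
  qed
  have "m = card (Kset \<union> (Cand \<inter> {s. \<sigma>!s = g}) \<union> (if \<sigma>!t = g then {t} else {}))"
    using decks_count[OF assms(1,2)] U by simp
  also have "\<dots> = card Kset + card (Cand \<inter> {s. \<sigma>!s = g}) + (if \<sigma>!t = g then 1 else 0)"
  proof -
    have f1: "finite Kset" "finite (Cand \<inter> {s. \<sigma>!s = g})" by (auto simp: Kset_def Cand_def)
    have d1: "Kset \<inter> (Cand \<inter> {s. \<sigma>!s = g}) = {}" by (auto simp: Kset_def Cand_def)
    have d2: "(Kset \<union> (Cand \<inter> {s. \<sigma>!s = g})) \<inter> (if \<sigma>!t = g then {t} else {}) = {}"
      by (auto simp: Kset_def Cand_def)
    show ?thesis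
      by (subst card_Un_disjoint[OF _ _ d2], use f1 in simp, simp, subst card_Un_disjoint[OF f1 d1], simp)
  qed
  finally show ?thesis by simp
qed

lemma swap_swap:
  assumes "s < length \<sigma>" "t < length \<sigma>"
  shows "(\<sigma>[t := \<sigma> ! s, s := \<sigma> ! t])[t := (\<sigma>[t := \<sigma> ! s, s := \<sigma> ! t]) ! s, s := (\<sigma>[t := \<sigma> ! s, s := \<sigma> ! t]) ! t] = \<sigma>"
  using assms by (intro nth_equalityI) (auto simp: nth_list_update)

lemma posterior:
  assumes \<pi>0: "\<pi>0 \<in> decks m n" and h: "h = hist G \<pi>0 t"
  shows "card {\<sigma>\<in>decks m n. hist G \<sigma> t = h \<and> \<sigma>!t = g} * (card Cand + 1)
     \<le> card {\<sigma>\<in>decks m n. hist G \<sigma> t = h} * (m - card Kset)"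
proof (cases "g < n")
  case False
  have "{\<sigma>\<in>decks m n. hist G \<sigma> t = h \<and> \<sigma>!t = g} = {}"
    using decks_nth_lt[OF _ t] False by fastforce
  then show ?thesis by (metis card.empty mult_0 zero_le)
next
  case gn: True
  define \<Omega> where "\<Omega> = decks m n"
  define C where "C = {\<sigma>\<in>\<Omega>. hist G \<sigma> t = h}"
  define A where "A = {\<sigma>\<in>C. \<sigma>!t = g}"
  define B where "B = {\<sigma>\<in>C. \<sigma>!t \<noteq> g}"
  define sw where "sw = (\<lambda>\<sigma> s. \<sigma>[t := \<sigma> ! s, s := (\<sigma>::nat list) ! t])"
  define P where "P = Sigma A (\<lambda>\<sigma>. {s\<in>Cand. \<sigma>!s \<noteq> g})"
  define Q where "Q = Sigma B (\<lambda>\<sigma>. Cand \<inter> {s. \<sigma>!s = g})"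
  define f where "f = (\<lambda>(\<sigma>,s). (sw \<sigma> s, s))"
  have finO: "finite \<Omega>" by (simp add: \<Omega>_def finite_decks)
  have finC: "finite C" "finite A" "finite B" using finO by (auto simp: C_def A_def B_def)
  have finCand: "finite Cand" by (simp add: Cand_def)
  have CAB: "card C = card A + card B"
  proof -
    have "C = A \<union> B" "A \<inter> B = {}" by (auto simp: A_def B_def)
    then show ?thesis using finC card_Un_disjoint by metis
  qed
  have lenC: "length \<sigma> = m*n" if "\<sigma> \<in> C" for \<sigma> using that by (simp add: C_def \<Omega>_def decks_len)
  have pd: "card Kset + card (Cand \<inter> {s. \<sigma>!s = g}) + (if \<sigma>!t = g then 1 else 0) = m" if "\<sigma> \<in> C" for \<sigma>
    using pos_decomp[of \<sigma>] that gn by (simp add: C_def \<Omega>_def)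
  have hn: "h ! r = (G (hist G \<sigma> r), G (hist G \<sigma> r) = \<sigma> ! r)" if "\<sigma> \<in> C" "r < t" for \<sigma> r
    using hist_nth[OF that(2), of G \<sigma>] that(1) by (simp add: C_def)
  have inj: "inj_on f P"
  proof (rule inj_onI)
    fix x y assume xy: "x \<in> P" "y \<in> P" "f x = f y"
    obtain \<sigma> s where x: "x = (\<sigma>, s)" by (cases x)
    obtain \<sigma>' s' where y: "y = (\<sigma>', s')" by (cases y)
    have ss: "s' = s" and sw: "sw \<sigma> s = sw \<sigma>' s" using xy x y by (auto simp: f_def)
    have l: "length \<sigma> = m*n" "length \<sigma>' = m*n" "s < m*n"
      using xy x y ss lenC by (auto simp: P_def A_def Cand_def)
    have "\<sigma> = sw (sw \<sigma> s) s" unfolding sw_def by (rule swap_swap[symmetric]) (use l t in auto)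
    also have "\<dots> = sw (sw \<sigma>' s) s" using sw by simp
    also have "\<dots> = \<sigma>'" unfolding sw_def by (rule swap_swap) (use l t in auto)
    finally show "x = y" using x y ss by simp
  qed
  have img: "f ` P \<subseteq> Q"
  proof
    fix z assume "z \<in> f ` P"
    then obtain \<sigma> s where z: "z = (sw \<sigma> s, s)" and \<sigma>A: "\<sigma> \<in> A" and sC: "s \<in> Cand" and sg: "\<sigma>!s \<noteq> g"
      by (auto simp: f_def P_def)
    have \<sigma>C: "\<sigma> \<in> C" and \<sigma>t: "\<sigma>!t = g" using \<sigma>A by (auto simp: A_def)
    have s: "s < m*n" "s \<noteq> t" using sC by (auto simp: Cand_def)
    have l: "length \<sigma> = m*n" using lenC \<sigma>C by simp
    have nth1: "sw \<sigma> s ! t = \<sigma> ! s" "sw \<sigma> s ! s = g" using l s t \<sigma>t by (auto simp: sw_def nth_list_update)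
    have nth2: "sw \<sigma> s ! r = \<sigma> ! r" if "r \<noteq> s" "r \<noteq> t" for r using that by (simp add: sw_def)
    have "sw \<sigma> s \<in> \<Omega>" using decks_swap[of \<sigma> m n t s] \<sigma>C s t by (simp add: sw_def C_def \<Omega>_def)
    moreover have "hist G (sw \<sigma> s) t = h"
    proof -
      have "hist G (sw \<sigma> s) t = hist G \<sigma> t"
      proof (rule hist_cong)
        fix r assume r: "r < t"
        show "(G (hist G \<sigma> r) = \<sigma> ! r) = (G (hist G \<sigma> r) = sw \<sigma> s ! r)"
        proof (cases "r = s")
          case True
          have "\<not> snd (h!s) \<and> fst (h!s) \<noteq> g" using sC r True by (auto simp: Cand_def)
          then show ?thesis using hn[OF \<sigma>C r] True nth1 by auto
        next
          case False then show ?thesis using nth2 r by simp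
        qed
      qed
      then show ?thesis using \<sigma>C by (simp add: C_def)
    qed
    ultimately show "z \<in> Q" using z nth1 sg sC by (auto simp: Q_def B_def C_def)
  qed
  have finQ: "finite Q" using finC finCand by (simp add: Q_def)
  have PQ: "card P \<le> card Q" using card_inj_on_le[OF inj img finQ] .
  have cP: "card P + card A * (m - card Kset) = card A * (card Cand + 1)"
  proof -
    have s1: "card P = (\<Sum>\<sigma>\<in>A. card {s\<in>Cand. \<sigma>!s \<noteq> g})" unfolding P_def
      using finC finCand by (simp add: card_SigmaI)
    have s2: "card {s\<in>Cand. \<sigma>!s \<noteq> g} + (m - card Kset) = card Cand + 1" if "\<sigma> \<in> A" for \<sigma>
    proof -
      have "\<sigma> \<in> C" "\<sigma>!t = g" using that by (auto simp: A_def)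
      then have e: "card Kset + card (Cand \<inter> {s. \<sigma>!s = g}) + 1 = m" using pd by fastforce
      have "card Cand = card {s\<in>Cand. \<sigma>!s \<noteq> g} + card (Cand \<inter> {s. \<sigma>!s = g})"
      proof -
        have "Cand = {s\<in>Cand. \<sigma>!s \<noteq> g} \<union> (Cand \<inter> {s. \<sigma>!s = g})" by auto
        moreover have "{s\<in>Cand. \<sigma>!s \<noteq> g} \<inter> (Cand \<inter> {s. \<sigma>!s = g}) = {}" by auto
        ultimately show ?thesis using finCand card_Un_disjoint
          by (metis (no_types, lifting) finite_Int finite_subset mem_Collect_eq subsetI)
      qed
      then show ?thesis using e by simp
    qed
    have "card P + card A * (m - card Kset) = (\<Sum>\<sigma>\<in>A. card {s\<in>Cand. \<sigma>!s \<noteq> g}) + (\<Sum>\<sigma>\<in>A. (m - card Kset))"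
      using s1 by simp
    also have "\<dots> = (\<Sum>\<sigma>\<in>A. card {s\<in>Cand. \<sigma>!s \<noteq> g} + (m - card Kset))"
      by (rule sum.distrib[symmetric])
    also have "\<dots> = (\<Sum>\<sigma>\<in>A. card Cand + 1)" by (rule sum.cong) (use s2 in auto)
    finally show ?thesis by simp
  qed
  have cQ: "card Q = card B * (m - card Kset)"
  proof -
    have "card Q = (\<Sum>\<sigma>\<in>B. card (Cand \<inter> {s. \<sigma>!s = g}))" unfolding Q_def
      using finC finCand by (simp add: card_SigmaI)
    moreover have "card (Cand \<inter> {s. \<sigma>!s = g}) = m - card Kset" if "\<sigma> \<in> B" for \<sigma>
    proof -
      have "\<sigma> \<in> C" "\<sigma>!t \<noteq> g" using that by (auto simp: B_def)
      then show ?thesis using pd by fastforce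
    qed
    ultimately show ?thesis by simp
  qed
  have "card A * (card Cand + 1) \<le> card C * (m - card Kset)"
    using cP cQ PQ CAB by (simp add: add_mult_distrib)
  moreover have "A = {\<sigma>\<in>decks m n. hist G \<sigma> t = h \<and> \<sigma>!t = g}" by (auto simp: A_def C_def \<Omega>_def)
  moreover have "C = {\<sigma>\<in>decks m n. hist G \<sigma> t = h}" by (auto simp: C_def \<Omega>_def)
  ultimately show ?thesis by simp
qed

lemma k_le:
  assumes "\<sigma> \<in> decks m n" "hist G \<sigma> t = h" "g < n"
  shows "card Kset + 1 \<le> m \<or> (card Kset \<le> m)" and "m - card Kset \<le> card Cand + 1"
proof -
  have pd: "card Kset + card (Cand \<inter> {s. \<sigma>!s = g}) + (if \<sigma>!t = g then 1 else 0) = m"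
    using pos_decomp[OF assms(1,3,2)] .
  then show "card Kset + 1 \<le> m \<or> (card Kset \<le> m)" by auto
  have "card (Cand \<inter> {s. \<sigma>!s = g}) \<le> card Cand" by (rule card_mono) (auto simp: Cand_def)
  then show "m - card Kset \<le> card Cand + 1" using pd by (auto split: if_splits)
qed

end

lemma cnt_snoc: "cnt P (h @ [x]) = cnt P h + (if P x then 1 else 0)"
proof -
  have "{r. r < length (h @ [x]) \<and> P ((h @ [x]) ! r)} =
        {r. r < length h \<and> P (h ! r)} \<union> (if P x then {length h} else {})"
    by (auto simp: nth_append less_Suc_eq)
  then show ?thesis by (auto simp: cnt_def card_insert_if)
qed

lemma cnt_two_le: "cnt (\<lambda>x. fst x = g) h + cnt (\<lambda>x. snd x \<and> fst x \<noteq> g) h \<le> length h"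
proof -
  have "cnt (\<lambda>x. fst x = g) h + cnt (\<lambda>x. snd x \<and> fst x \<noteq> g) h
      = card ({r. r < length h \<and> fst (h!r) = g} \<union> {r. r < length h \<and> snd (h!r) \<and> fst (h!r) \<noteq> g})"
    unfolding cnt_def by (subst card_Un_disjoint) auto
  also have "\<dots> \<le> card {..<length h}" by (rule card_mono) auto
  finally show ?thesis by simp
qed

lemma posterior2:
  assumes \<pi>0: "\<pi>0 \<in> decks m n" and t: "t < m*n" and h: "h = hist G \<pi>0 t"
  shows "real (card {\<sigma>\<in>decks m n. hist G \<sigma> t = h \<and> \<sigma>!t = g}) *
           (real (m*n) - real (cnt (\<lambda>x. fst x = g) h) - real (cnt (\<lambda>x. snd x \<and> fst x \<noteq> g) h))
         \<le> real (card {\<sigma>\<in>decks m n. hist G \<sigma> t = h}) * (real m - real (cnt (\<lambda>x. x = (g,True)) h))"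
    and "cnt (\<lambda>x. x = (g,True)) h \<le> m"
    and "g < n \<Longrightarrow> real m - real (cnt (\<lambda>x. x = (g,True)) h) \<le>
           real (m*n) - real (cnt (\<lambda>x. fst x = g) h) - real (cnt (\<lambda>x. snd x \<and> fst x \<noteq> g) h)"
    and "real (m*n) - real t \<le> real (m*n) - real (cnt (\<lambda>x. fst x = g) h) - real (cnt (\<lambda>x. snd x \<and> fst x \<noteq> g) h)"
proof -
  have len: "length h = t" using h by simp
  have cc: "card (Cand m n t g h) + 1 + cnt (\<lambda>x. fst x = g) h + cnt (\<lambda>x. snd x \<and> fst x \<noteq> g) h = m*n"
    using cand_card[OF t len] .
  have kk: "card (Kset t g h) = cnt (\<lambda>x. x = (g,True)) h" by (simp add: Kset_def[OF t] cnt_def len)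
  have p: "card {\<sigma>\<in>decks m n. hist G \<sigma> t = h \<and> \<sigma>!t = g} * (card (Cand m n t g h) + 1)
     \<le> card {\<sigma>\<in>decks m n. hist G \<sigma> t = h} * (m - card (Kset t g h))"
    using posterior[OF t \<pi>0 h] .
  have hh: "hist G \<pi>0 t = h" using h by simp
  have KE: "Kset t g h = {}" if "\<not> g < n"
    proof (rule ccontr)
      assume "Kset t g h \<noteq> {}"
      then obtain r where r: "r < t" "h ! r = (g, True)" by (auto simp: Kset_def[OF t])
      then have "\<pi>0 ! r = g" using hist_nth[OF r(1), of G \<pi>0] h by auto
      moreover have "\<pi>0 ! r < n" using decks_nth_lt[OF \<pi>0] r(1) t by simp
      ultimately show False using that by simp
    qed
  show "cnt (\<lambda>x. x = (g,True)) h \<le> m"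
  proof (cases "g < n")
    case True then show ?thesis using k_le(1)[OF t \<pi>0 hh, where g=g] kk by fastforce
  next
    case False then show ?thesis using KE kk by simp
  qed
  show "g < n \<Longrightarrow> real m - real (cnt (\<lambda>x. x = (g,True)) h) \<le>
           real (m*n) - real (cnt (\<lambda>x. fst x = g) h) - real (cnt (\<lambda>x. snd x \<and> fst x \<noteq> g) h)"
  proof -
    assume gn: "g < n"
    have a: "card (Kset t g h) \<le> m" using k_le(1)[OF t \<pi>0 hh, where g=g] gn by auto
    have b: "m - card (Kset t g h) \<le> card (Cand m n t g h) + 1" using k_le(2)[OF t \<pi>0 hh, where g=g] gn by auto
    have "real m - real (card (Kset t g h)) \<le> real (card (Cand m n t g h)) + 1"
    proof -
      have "real (m - card (Kset t g h)) \<le> real (card (Cand m n t g h) + 1)" using b by (simp only: of_nat_le_iff)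
      then show ?thesis using a by (simp add: of_nat_diff)
    qed
    moreover have "real (card (Cand m n t g h)) + 1 + real (cnt (\<lambda>x. fst x = g) h) + real (cnt (\<lambda>x. snd x \<and> fst x \<noteq> g) h) = real (m*n)"
    proof -
      have "real (card (Cand m n t g h) + 1 + cnt (\<lambda>x. fst x = g) h + cnt (\<lambda>x. snd x \<and> fst x \<noteq> g) h) = real (m*n)"
        using cc by (simp only:)
      then show ?thesis by simp
    qed
    ultimately show ?thesis using kk by linarith
  qed
  show "real (m*n) - real t \<le> real (m*n) - real (cnt (\<lambda>x. fst x = g) h) - real (cnt (\<lambda>x. snd x \<and> fst x \<noteq> g) h)"
    using cnt_two_le[of g h] len by linarith
  have "real (card {\<sigma>\<in>decks m n. hist G \<sigma> t = h \<and> \<sigma>!t = g}) * real (card (Cand m n t g h) + 1)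
     \<le> real (card {\<sigma>\<in>decks m n. hist G \<sigma> t = h}) * real (m - card (Kset t g h))"
  proof -
    have "real (card {\<sigma>\<in>decks m n. hist G \<sigma> t = h \<and> \<sigma>!t = g} * (card (Cand m n t g h) + 1))
     \<le> real (card {\<sigma>\<in>decks m n. hist G \<sigma> t = h} * (m - card (Kset t g h)))"
      using p by (simp only: of_nat_le_iff)
    then show ?thesis by (simp only: of_nat_mult)
  qed
  moreover have "real (card (Cand m n t g h) + 1) = real (m*n) - real (cnt (\<lambda>x. fst x = g) h) - real (cnt (\<lambda>x. snd x \<and> fst x \<noteq> g) h)"
  proof -
    have "real (card (Cand m n t g h) + 1 + cnt (\<lambda>x. fst x = g) h + cnt (\<lambda>x. snd x \<and> fst x \<noteq> g) h) = real (m*n)"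
      using cc by (simp only:)
    then show ?thesis by simp
  qed
  moreover have "real (m - card (Kset t g h)) = real m - real (cnt (\<lambda>x. x = (g,True)) h)"
  proof (cases "g < n")
    case True then show ?thesis using k_le(1)[OF t \<pi>0 hh, where g=g] kk by (auto simp: of_nat_diff)
  next
    case False
    then show ?thesis using KE kk by simp
  qed
  ultimately show "real (card {\<sigma>\<in>decks m n. hist G \<sigma> t = h \<and> \<sigma>!t = g}) *
           (real (m*n) - real (cnt (\<lambda>x. fst x = g) h) - real (cnt (\<lambda>x. snd x \<and> fst x \<noteq> g) h))
         \<le> real (card {\<sigma>\<in>decks m n. hist G \<sigma> t = h}) * (real m - real (cnt (\<lambda>x. x = (g,True)) h))"
    by simp
qed

lemma supermart:
  fixes \<Phi> :: "history \<Rightarrow> real"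
  assumes fin: "finite \<Omega>"
    and step: "\<And>t \<pi>. t < L \<Longrightarrow> \<pi> \<in> \<Omega> \<Longrightarrow>
      (\<Sum>\<sigma>\<in>{\<sigma>\<in>\<Omega>. hist G \<sigma> t = hist G \<pi> t}. \<Phi> (hist G \<sigma> (Suc t)))
        \<le> real (card {\<sigma>\<in>\<Omega>. hist G \<sigma> t = hist G \<pi> t}) * \<Phi> (hist G \<pi> t)"
  shows "(\<Sum>\<pi>\<in>\<Omega>. \<Phi> (hist G \<pi> L)) \<le> real (card \<Omega>) * \<Phi> []"
  using step
proof (induction L)
  case 0
  then show ?case by simp
next
  case (Suc L)
  let ?k = "\<lambda>\<pi>. hist G \<pi> L"
  have "(\<Sum>\<pi>\<in>\<Omega>. \<Phi> (hist G \<pi> (Suc L))) = (\<Sum>v\<in>?k ` \<Omega>. \<Sum>\<pi>\<in>{\<pi>\<in>\<Omega>. ?k \<pi> = v}. \<Phi> (hist G \<pi> (Suc L)))"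
    by (rule sum.image_gen[OF fin])
  also have "\<dots> \<le> (\<Sum>v\<in>?k ` \<Omega>. \<Sum>\<pi>\<in>{\<pi>\<in>\<Omega>. ?k \<pi> = v}. \<Phi> (hist G \<pi> L))"
  proof (rule sum_mono)
    fix v assume "v \<in> ?k ` \<Omega>"
    then obtain \<pi> where \<pi>: "\<pi> \<in> \<Omega>" "v = ?k \<pi>" by auto
    have "(\<Sum>\<sigma>\<in>{\<sigma>\<in>\<Omega>. ?k \<sigma> = v}. \<Phi> (hist G \<sigma> (Suc L))) \<le> real (card {\<sigma>\<in>\<Omega>. ?k \<sigma> = v}) * \<Phi> v"
      using Suc.prems[of L \<pi>] \<pi> by simp
    also have "\<dots> = (\<Sum>\<sigma>\<in>{\<sigma>\<in>\<Omega>. ?k \<sigma> = v}. \<Phi> (hist G \<sigma> L))" by simp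
    finally show "(\<Sum>\<sigma>\<in>{\<sigma>\<in>\<Omega>. ?k \<sigma> = v}. \<Phi> (hist G \<sigma> (Suc L))) \<le> (\<Sum>\<sigma>\<in>{\<sigma>\<in>\<Omega>. ?k \<sigma> = v}. \<Phi> (hist G \<sigma> L))" .
  qed
  also have "\<dots> = (\<Sum>\<pi>\<in>\<Omega>. \<Phi> (hist G \<pi> L))"
    by (rule sum.image_gen[OF fin, symmetric])
  also have "\<dots> \<le> real (card \<Omega>) * \<Phi> []"
    using Suc.IH Suc.prems by simp
  finally show ?case .
qed

lemma class_sum:
  fixes F :: "history \<Rightarrow> real"
  assumes fin: "finite \<Omega>"
  shows "(\<Sum>\<sigma>\<in>{\<sigma>\<in>\<Omega>. hist G \<sigma> t = h}. F (hist G \<sigma> (Suc t)))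
     = real (card {\<sigma>\<in>\<Omega>. hist G \<sigma> t = h \<and> \<sigma>!t = G h}) * F (h @ [(G h, True)])
     + real (card {\<sigma>\<in>\<Omega>. hist G \<sigma> t = h \<and> \<sigma>!t \<noteq> G h}) * F (h @ [(G h, False)])"
proof -
  have e: "{\<sigma>\<in>\<Omega>. hist G \<sigma> t = h} = {\<sigma>\<in>\<Omega>. hist G \<sigma> t = h \<and> \<sigma>!t = G h} \<union> {\<sigma>\<in>\<Omega>. hist G \<sigma> t = h \<and> \<sigma>!t \<noteq> G h}"
    by auto
  have "(\<Sum>\<sigma>\<in>{\<sigma>\<in>\<Omega>. hist G \<sigma> t = h}. F (hist G \<sigma> (Suc t)))
      = (\<Sum>\<sigma>\<in>{\<sigma>\<in>\<Omega>. hist G \<sigma> t = h \<and> \<sigma>!t = G h}. F (hist G \<sigma> (Suc t)))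
      + (\<Sum>\<sigma>\<in>{\<sigma>\<in>\<Omega>. hist G \<sigma> t = h \<and> \<sigma>!t \<noteq> G h}. F (hist G \<sigma> (Suc t)))"
    unfolding e using fin by (intro sum.union_disjoint) auto
  also have "(\<Sum>\<sigma>\<in>{\<sigma>\<in>\<Omega>. hist G \<sigma> t = h \<and> \<sigma>!t = G h}. F (hist G \<sigma> (Suc t)))
       = (\<Sum>\<sigma>\<in>{\<sigma>\<in>\<Omega>. hist G \<sigma> t = h \<and> \<sigma>!t = G h}. F (h @ [(G h, True)]))"
    by (rule sum.cong) auto
  also have "(\<Sum>\<sigma>\<in>{\<sigma>\<in>\<Omega>. hist G \<sigma> t = h \<and> \<sigma>!t \<noteq> G h}. F (hist G \<sigma> (Suc t)))
       = (\<Sum>\<sigma>\<in>{\<sigma>\<in>\<Omega>. hist G \<sigma> t = h \<and> \<sigma>!t \<noteq> G h}. F (h @ [(G h, False)]))"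
    by (rule sum.cong) auto
  finally show ?thesis by simp
qed

lemma crit_real:
  fixes cA cB U r xT xF P :: real
  assumes "0 \<le> cA" "0 \<le> cB" "cA * U \<le> (cA + cB) * r" "U > 0" "r \<ge> 0"
    and "xF \<le> P" "xF + (r/U) * (xT - xF) \<le> P"
  shows "cA * xT + cB * xF \<le> (cA + cB) * P"
proof -
  have q: "cA \<le> (cA + cB) * (r/U)" using assms(3,4) by (simp add: field_simps)
  have e: "cA * xT + cB * xF = (cA + cB) * xF + cA * (xT - xF)" by (simp add: algebra_simps)
  show ?thesis
  proof (cases "xT \<ge> xF")
    case True
    then have "cA * (xT - xF) \<le> (cA + cB) * (r/U) * (xT - xF)" using q by (intro mult_right_mono) auto
    then have "cA * xT + cB * xF \<le> (cA + cB) * (xF + (r/U) * (xT - xF))" using e by (simp add: algebra_simps)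
    also have "\<dots> \<le> (cA + cB) * P" using assms by (intro mult_left_mono) auto
    finally show ?thesis .
  next
    case False
    then have "cA * (xT - xF) \<le> 0" using assms(1) by (simp add: mult_nonneg_nonpos)
    then have "cA * xT + cB * xF \<le> (cA + cB) * xF" using e by simp
    also have "\<dots> \<le> (cA + cB) * P" using assms by (intro mult_left_mono) auto
    finally show ?thesis .
  qed
qed

lemma step_ok:
  fixes F :: "history \<Rightarrow> real"
  assumes \<pi>0: "\<pi>0 \<in> decks m n" and t: "t < m*n"
    and U: "U = real (m*n) - real (cnt (\<lambda>x. fst x = G (hist G \<pi>0 t)) (hist G \<pi>0 t)) - real (cnt (\<lambda>x. snd x \<and> fst x \<noteq> G (hist G \<pi>0 t)) (hist G \<pi>0 t))"
    and r: "r = real m - real (cnt (\<lambda>x. x = (G (hist G \<pi>0 t),True)) (hist G \<pi>0 t))"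
    and r0: "r \<ge> 0"
    and F1: "F (hist G \<pi>0 t @ [(G (hist G \<pi>0 t), False)]) \<le> F (hist G \<pi>0 t)"
    and F2: "F (hist G \<pi>0 t @ [(G (hist G \<pi>0 t), False)]) + (r/U) * (F (hist G \<pi>0 t @ [(G (hist G \<pi>0 t), True)]) - F (hist G \<pi>0 t @ [(G (hist G \<pi>0 t), False)])) \<le> F (hist G \<pi>0 t)"
  shows "(\<Sum>\<sigma>\<in>{\<sigma>\<in>decks m n. hist G \<sigma> t = hist G \<pi>0 t}. F (hist G \<sigma> (Suc t)))
        \<le> real (card {\<sigma>\<in>decks m n. hist G \<sigma> t = hist G \<pi>0 t}) * F (hist G \<pi>0 t)"
proof -
  let ?h = "hist G \<pi>0 t" and ?\<Omega> = "decks m n"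
  let ?A = "{\<sigma>\<in>?\<Omega>. hist G \<sigma> t = ?h \<and> \<sigma>!t = G ?h}" and ?B = "{\<sigma>\<in>?\<Omega>. hist G \<sigma> t = ?h \<and> \<sigma>!t \<noteq> G ?h}"
  have cs: "card {\<sigma>\<in>?\<Omega>. hist G \<sigma> t = ?h} = card ?A + card ?B"
  proof -
    have "{\<sigma>\<in>?\<Omega>. hist G \<sigma> t = ?h} = ?A \<union> ?B" "?A \<inter> ?B = {}" by auto
    moreover have "finite ?A" "finite ?B" using finite_decks by auto
    ultimately show ?thesis by (simp add: card_Un_disjoint)
  qed
  have Upos: "U > 0" using posterior2(4)[OF \<pi>0 t refl[of "hist G \<pi>0 t"], of "G ?h"] U t by linarith
  have post: "real (card ?A) * U \<le> (real (card ?A) + real (card ?B)) * r"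
    using posterior2(1)[OF \<pi>0 t refl[of "hist G \<pi>0 t"], of "G ?h"] U r cs by simp
  have "(\<Sum>\<sigma>\<in>{\<sigma>\<in>?\<Omega>. hist G \<sigma> t = ?h}. F (hist G \<sigma> (Suc t)))
      = real (card ?A) * F (?h @ [(G ?h, True)]) + real (card ?B) * F (?h @ [(G ?h, False)])"
    by (rule class_sum[OF finite_decks])
  also have "\<dots> \<le> (real (card ?A) + real (card ?B)) * F ?h"
    by (rule crit_real[OF _ _ post Upos r0 F1 F2]) auto
  finally show ?thesis using cs by simp
qed



lemma exp_neg_bound:
  fixes y :: real assumes "0 \<le> y" shows "exp (-y) \<le> 1 - y + y^2"
proof -
  have "exp (-y) = 1 / exp y" by (simp add: exp_minus field_simps)
  also have "\<dots> \<le> 1 / (1 + y)" using assms by (intro divide_left_mono) (auto intro: add_pos_nonneg)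
  also have "\<dots> \<le> 1 - y + y^2"
  proof -
    have "1 \<le> (1 + y) * (1 - y + y^2)" using assms by (simp add: algebra_simps power2_eq_square power3_eq_cube)
    then show ?thesis using assms by (simp add: field_simps)
  qed
  finally show ?thesis .
qed

lemma exp_step:
  fixes r U \<theta> B :: real
  assumes r0: "0 \<le> r" and rU: "r \<le> U" and U1: "1 < U" and th0: "0 \<le> \<theta>" and thU: "\<theta> \<le> U - 1"
    and B: "2 * \<theta>^2 * r / (U * (U-1)^2) \<le> B"
  shows "(1 - r/U) * exp (-\<theta> * (r/(U-1) - r/U) - B) + (r/U) * exp (-\<theta> * ((r-1)/(U-1) - r/U) - B) \<le> 1"
proof -
  define q where "q = r/U"
  define x0 where "x0 = \<theta> * r / (U*(U-1))"
  define x1 where "x1 = \<theta> * (U - r) / (U*(U-1))"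
  have Up: "U > 0" "U - 1 > 0" using U1 by auto
  have e0: "-\<theta> * (r/(U-1) - r/U) = -x0" unfolding x0_def using Up by (simp add: field_simps)
  have e1: "-\<theta> * ((r-1)/(U-1) - r/U) = x1" unfolding x1_def using Up by (simp add: field_simps)
  have q01: "0 \<le> q" "q \<le> 1" unfolding q_def using r0 rU Up by auto
  have x0: "0 \<le> x0" "x0 \<le> 1"
  proof -
    show "0 \<le> x0" unfolding x0_def using r0 th0 Up by auto
    have "x0 = (\<theta>/(U-1)) * (r/U)" unfolding x0_def by (simp add: field_simps)
    also have "\<dots> \<le> 1 * 1" using thU Up r0 rU th0 by (intro mult_mono) (auto simp: field_simps)
    finally show "x0 \<le> 1" by simp
  qed
  have x1: "0 \<le> x1" "x1 \<le> 1"
  proof -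
    show "0 \<le> x1" unfolding x1_def using rU th0 Up by auto
    have "x1 = (\<theta>/(U-1)) * ((U-r)/U)" unfolding x1_def by (simp add: field_simps)
    also have "\<dots> \<le> 1 * 1" using thU Up r0 rU th0 by (intro mult_mono) (auto simp: field_simps)
    finally show "x1 \<le> 1" by simp
  qed
  have bal: "q * x1 = (1 - q) * x0" unfolding q_def x0_def x1_def using Up by (simp add: field_simps)
  have sq0: "(1 - q) * x0^2 \<le> \<theta>^2 * r / (U * (U-1)^2)"
  proof -
    have "(1 - q) * x0^2 \<le> x0^2" using q01 by (simp add: mult_left_le_one_le)
    also have "x0^2 = (\<theta>^2 * r / (U * (U-1)^2)) * (r/U)" unfolding x0_def using Up
      by (simp add: field_simps power2_eq_square)
    also have "\<dots> \<le> \<theta>^2 * r / (U * (U-1)^2)" using q01 r0 Up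
      by (intro mult_left_le) (auto simp: q_def)
    finally show ?thesis .
  qed
  have sq1: "q * x1^2 \<le> \<theta>^2 * r / (U * (U-1)^2)"
  proof -
    have "q * x1^2 = (\<theta>^2 * r / (U * (U-1)^2)) * ((U-r)/U)^2" unfolding q_def x1_def using Up
      by (simp add: field_simps power2_eq_square)
    also have "\<dots> \<le> \<theta>^2 * r / (U * (U-1)^2)"
    proof (rule mult_left_le)
      show "((U-r)/U)^2 \<le> 1" using r0 rU Up by (intro power_le_one) (auto simp: field_simps)
    qed (use r0 Up in auto)
    finally show ?thesis .
  qed
  have "(1 - q) * exp (-x0) + q * exp x1 \<le> (1 - q) * (1 - x0 + x0^2) + q * (1 + x1 + x1^2)"
    using q01 exp_neg_bound[OF x0(1)] exp_bound[OF x1] by (intro add_mono mult_left_mono) auto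
  also have "\<dots> = 1 + (1 - q) * x0^2 + q * x1^2" using bal by (simp add: algebra_simps)
  also have "\<dots> \<le> 1 + B" using sq0 sq1 B by simp
  also have "\<dots> \<le> exp B" by simp
  finally have main: "(1 - q) * exp (-x0) + q * exp x1 \<le> exp B" .
  have "(1 - r/U) * exp (-\<theta> * (r/(U-1) - r/U) - B) + (r/U) * exp (-\<theta> * ((r-1)/(U-1) - r/U) - B)
      = ((1 - q) * exp (-x0) + q * exp x1) * exp (-B)"
    unfolding e0 e1 q_def by (simp add: exp_diff exp_minus field_simps)
  also have "\<dots> \<le> exp B * exp (-B)" using main by (intro mult_right_mono) auto
  also have "\<dots> = 1" by (simp add: exp_minus)
  finally show ?thesis .
qed



context
  fixes m n i :: nat and \<epsilon> \<theta> \<beta> Rmax :: real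
begin

definition "aa h = cnt (\<lambda>x. fst x = i) h"
definition "kk h = cnt (\<lambda>x. x = (i,True)) h"
definition "RR h = cnt (\<lambda>x. snd x \<and> fst x \<noteq> i) h"
definition "UU h = real (m*n) - real (aa h) - real (RR h)"
definition "DD h = (real m - real (kk h)) / UU h"
definition "act h \<longleftrightarrow> \<epsilon>*m*n \<le> real (aa h) \<and> real (aa h) < (1-\<epsilon>)*m*n \<and> real (RR h) \<le> Rmax"
definition "ww h x = (if act h then -\<theta>*(DD (h@[x]) - DD h) - (if fst x = i then \<theta>^2*\<beta> else 0) else 0)"
definition "Phi h = exp (\<Sum>s<length h. ww (take s h) (h!s))"

lemma Phi_snoc: "Phi (h @ [x]) = Phi h * exp (ww h x)"
proof -
  have "(\<Sum>s<length (h@[x]). ww (take s (h@[x])) ((h@[x])!s)) = (\<Sum>s<length h. ww (take s h) (h!s)) + ww h x"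
    by (simp add: nth_append)
  then show ?thesis unfolding Phi_def by (simp add: exp_add)
qed

lemma Phi_nil: "Phi [] = 1" by (simp add: Phi_def)
lemma Phi_pos: "Phi h > 0" by (simp add: Phi_def)

lemma Phi_step:
  fixes G :: strategy
  assumes \<pi>0: "\<pi>0 \<in> decks m n" and t: "t < m*n" and i: "i < n"
    and th0: "0 \<le> \<theta>" and V1: "1 < \<epsilon>*m*n - Rmax" and thV: "\<theta> \<le> \<epsilon>*m*n - Rmax - 1"
    and \<beta>: "2*m / ((\<epsilon>*m*n - Rmax) * (\<epsilon>*m*n - Rmax - 1)^2) \<le> \<beta>"
  shows "(\<Sum>\<sigma>\<in>{\<sigma>\<in>decks m n. hist G \<sigma> t = hist G \<pi>0 t}. Phi (hist G \<sigma> (Suc t)))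
        \<le> real (card {\<sigma>\<in>decks m n. hist G \<sigma> t = hist G \<pi>0 t}) * Phi (hist G \<pi>0 t)"
proof -
  define h where "h = hist G \<pi>0 t"
  define g where "g = G h"
  define U where "U = real (m*n) - real (cnt (\<lambda>x. fst x = g) h) - real (cnt (\<lambda>x. snd x \<and> fst x \<noteq> g) h)"
  define r where "r = real m - real (cnt (\<lambda>x. x = (g,True)) h)"
  have r0: "r \<ge> 0" using posterior2(2)[OF \<pi>0 t h_def, of g] by (simp add: r_def)
  have tr: "real t < real m * real n" using t by (metis of_nat_less_iff of_nat_mult)
  have Upos: "U > 0" using posterior2(4)[OF \<pi>0 t h_def, of g] tr by (simp add: U_def)
  have q0: "r/U \<ge> 0" using r0 Upos by simp
  have main: "Phi (h @ [(g, False)]) \<le> Phi h \<and>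
      Phi (h @ [(g, False)]) + (r/U) * (Phi (h @ [(g, True)]) - Phi (h @ [(g, False)])) \<le> Phi h"
  proof (cases "act h")
    case False
    then show ?thesis by (simp add: Phi_snoc ww_def)
  next
    case actT: True
    let ?V = "\<epsilon>*m*n - Rmax"
    have UUV: "UU h > ?V" using actT unfolding act_def UU_def by (simp add: algebra_simps)
    show ?thesis
    proof (cases "g = i")
      case False
      have wF: "ww h (g, False) = 0"
        using actT False by (simp add: ww_def DD_def UU_def aa_def kk_def RR_def cnt_snoc)
      have DT: "DD (h @ [(g, True)]) \<ge> DD h"
      proof -
        have kle: "real (kk h) \<le> real m" using posterior2(2)[OF \<pi>0 t h_def, of i] by (simp add: kk_def)
        have "DD (h @ [(g, True)]) = (real m - real (kk h)) / (UU h - 1)"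
          using False by (simp add: DD_def UU_def aa_def kk_def RR_def cnt_snoc algebra_simps)
        moreover have "(real m - real (kk h)) / UU h \<le> (real m - real (kk h)) / (UU h - 1)"
          using UUV V1 kle by (intro divide_left_mono) auto
        ultimately show ?thesis by (simp add: DD_def)
      qed
      have wT: "ww h (g, True) \<le> 0" using actT False DT th0 by (simp add: ww_def mult_nonneg_nonneg)
      have "Phi (h @ [(g, True)]) \<le> Phi (h @ [(g, False)])"
        using wF wT by (simp add: Phi_snoc Phi_pos)
      then have "(r/U) * (Phi (h @ [(g, True)]) - Phi (h @ [(g, False)])) \<le> 0"
        using q0 mult_nonneg_nonpos by (metis diff_le_0_iff_le)
      then show ?thesis using wF by (simp add: Phi_snoc)
    next
      case True
      have rr: "r = real m - real (kk h)" using True by (simp add: r_def kk_def)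
      have UU: "U = UU h" using True by (simp add: U_def UU_def aa_def RR_def)
      have rU: "r \<le> U" using posterior2(3)[OF \<pi>0 t h_def i] True by (simp add: r_def U_def)
      have DF: "DD (h @ [(g, False)]) = r / (U - 1)"
        using True by (simp add: DD_def UU_def aa_def kk_def RR_def cnt_snoc rr UU algebra_simps)
      have DTT: "DD (h @ [(g, True)]) = (r - 1) / (U - 1)"
        using True by (simp add: DD_def UU_def aa_def kk_def RR_def cnt_snoc rr UU algebra_simps)
      have D0: "DD h = r / U" by (simp add: DD_def rr UU)
      have wF: "ww h (g, False) = -\<theta> * (r/(U-1) - r/U) - \<theta>^2*\<beta>"
      proof -
        have "ww h (g, False) = -\<theta>*(DD (h@[(g,False)]) - DD h) - \<theta>^2*\<beta>" using actT True by (simp add: ww_def)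
        then show ?thesis using DF D0 by simp
      qed
      have wT: "ww h (g, True) = -\<theta> * ((r-1)/(U-1) - r/U) - \<theta>^2*\<beta>"
      proof -
        have "ww h (g, True) = -\<theta>*(DD (h@[(g,True)]) - DD h) - \<theta>^2*\<beta>" using actT True by (simp add: ww_def)
        then show ?thesis using DTT D0 by simp
      qed
      have UV: "U > ?V" using UUV UU by simp
      have rm: "r \<le> m" using rr by simp
      have Bb: "2 * \<theta>^2 * r / (U * (U-1)^2) \<le> \<theta>^2 * \<beta>"
      proof -
        have "(?V * (?V - 1)^2) \<le> U * (U-1)^2"
          using UV V1 by (intro mult_mono power_mono) auto
        then have "2 * r / (U * (U-1)^2) \<le> 2 * m / (?V * (?V - 1)^2)"
          using r0 rm V1 by (intro frac_le) auto
        then have "2 * r / (U * (U-1)^2) \<le> \<beta>" using \<beta> by linarith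
        then have "\<theta>^2 * (2 * r / (U * (U-1)^2)) \<le> \<theta>^2 * \<beta>" by (intro mult_left_mono) auto
        moreover have "2 * \<theta>^2 * r / (U * (U-1)^2) = \<theta>^2 * (2 * r / (U * (U-1)^2))" by simp
        ultimately show ?thesis by linarith
      qed
      have es: "(1 - r/U) * exp (-\<theta> * (r/(U-1) - r/U) - \<theta>^2*\<beta>) + (r/U) * exp (-\<theta> * ((r-1)/(U-1) - r/U) - \<theta>^2*\<beta>) \<le> 1"
        by (rule exp_step[OF r0 rU _ th0 _ Bb]) (use UV V1 thV in auto)
      have wFle: "ww h (g, False) \<le> 0"
      proof -
        have "r/U \<le> r/(U-1)" using r0 UV V1 by (intro divide_left_mono) auto
        then have "\<theta> * (r/(U-1) - r/U) \<ge> 0" using th0 by simp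
        moreover have "\<beta> \<ge> 0"
        proof -
          have "0 \<le> 2*m / ((\<epsilon>*m*n - Rmax) * (\<epsilon>*m*n - Rmax - 1)^2)" using V1 by simp
          then show ?thesis using \<beta> by linarith
        qed
        moreover have "\<theta>^2 * \<beta> \<ge> 0" using \<open>\<beta> \<ge> 0\<close> by simp
        ultimately show ?thesis using wF by linarith
      qed
      have "Phi (h @ [(g, False)]) + (r/U) * (Phi (h @ [(g, True)]) - Phi (h @ [(g, False)]))
          = Phi h * ((1 - r/U) * exp (ww h (g, False)) + (r/U) * exp (ww h (g, True)))"
        by (simp add: Phi_snoc algebra_simps)
      also have "\<dots> \<le> Phi h * 1" using es wF wT Phi_pos[of h] by (intro mult_left_mono) auto
      finally show ?thesis using wFle Phi_pos[of h] by (simp add: Phi_snoc)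
    qed
  qed
  show ?thesis
    apply (rule step_ok[OF \<pi>0 t refl refl])
    using r0 main by (simp_all add: U_def r_def h_def g_def)
qed

end



definition "Psi m n h = real (cnt snd h) + (\<Sum>s\<in>{length h..<m*n}. real m / (real (m*n) - real s))"

lemma Psi_step:
  fixes G :: strategy
  assumes \<pi>0: "\<pi>0 \<in> decks m n" and t: "t < m*n"
  shows "(\<Sum>\<sigma>\<in>{\<sigma>\<in>decks m n. hist G \<sigma> t = hist G \<pi>0 t}. Psi m n (hist G \<sigma> (Suc t)))
        \<le> real (card {\<sigma>\<in>decks m n. hist G \<sigma> t = hist G \<pi>0 t}) * Psi m n (hist G \<pi>0 t)"
proof -
  define h where "h = hist G \<pi>0 t"
  define g where "g = G h"
  define U where "U = real (m*n) - real (cnt (\<lambda>x. fst x = g) h) - real (cnt (\<lambda>x. snd x \<and> fst x \<noteq> g) h)"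
  define r where "r = real m - real (cnt (\<lambda>x. x = (g,True)) h)"
  have len: "length h = t" by (simp add: h_def)
  have tr: "real t < real m * real n" using t by (metis of_nat_less_iff of_nat_mult)
  have r0: "r \<ge> 0" using posterior2(2)[OF \<pi>0 t h_def, of g] by (simp add: r_def)
  have rm: "r \<le> m" by (simp add: r_def)
  have Ut: "U \<ge> real (m*n) - real t" using posterior2(4)[OF \<pi>0 t h_def, of g] by (simp add: U_def)
  have Upos: "U > 0" using Ut tr by simp
  define d where "d = real m / (real (m*n) - real t)"
  have d0: "d \<ge> 0" using tr by (simp add: d_def)
  have tail: "(\<Sum>s\<in>{t..<m*n}. real m / (real (m*n) - real s)) = d + (\<Sum>s\<in>{Suc t..<m*n}. real m / (real (m*n) - real s))"
    using t by (simp add: sum.atLeast_Suc_lessThan d_def)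
  have PF: "Psi m n (h @ [(g, False)]) = Psi m n h - d"
    using tail len by (simp add: Psi_def cnt_snoc)
  have PT: "Psi m n (h @ [(g, True)]) = Psi m n h - d + 1"
    using tail len by (simp add: Psi_def cnt_snoc)
  have q: "r / U \<le> d"
  proof -
    have "r / U \<le> real m / U" using r0 rm Upos by (intro divide_right_mono) auto
    also have "\<dots> \<le> real m / (real (m*n) - real t)" using Ut tr by (intro divide_left_mono) auto
    finally show ?thesis by (simp add: d_def)
  qed
  show ?thesis
    apply (rule step_ok[OF \<pi>0 t refl refl])
    using r0 PF PT d0 q by (simp_all add: U_def r_def h_def[symmetric] g_def[symmetric])
qed

lemma sum_inv_harm: "(\<Sum>s<N. 1 / (real N - real s)) = harm N"
proof (induction N)
  case 0 then show ?case by (simp add: harm_def)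
next
  case (Suc N)
  have "(\<Sum>s<Suc N. 1 / (real (Suc N) - real s)) = 1 / real (Suc N) + (\<Sum>s<N. 1 / (real (Suc N) - real (Suc s)))"
    by (subst sum.lessThan_Suc_shift) simp
  also have "(\<Sum>s<N. 1 / (real (Suc N) - real (Suc s))) = (\<Sum>s<N. 1 / (real N - real s))" by simp
  finally show ?case using Suc by (simp add: harm_Suc inverse_eq_divide)
qed

lemma harm_le_ln: "N \<ge> 1 \<Longrightarrow> harm N \<le> ln (real N) + 1"
  using euler_mascheroni_sequence_decreasing[of 1 N] by (simp add: harm_def)

lemma Psi_nil: "Psi m n [] = real m * harm (m*n)"
proof -
  have "Psi m n [] = (\<Sum>s<m*n. real m * (1 / (real (m*n) - real s)))"
    by (simp add: Psi_def atLeast0LessThan cnt_def)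
  also have "\<dots> = real m * (\<Sum>s<m*n. 1 / (real (m*n) - real s))" by (rule sum_distrib_left[symmetric])
  also have "\<dots> = real m * harm (m*n)" by (simp only: sum_inv_harm)
  finally show ?thesis .
qed

lemma expect_correct:
  fixes G :: strategy
  shows "(\<Sum>\<pi>\<in>decks m n. real (cnt snd (hist G \<pi> (m*n)))) \<le> real (card (decks m n)) * (real m * harm (m*n))"
proof -
  have "(\<Sum>\<pi>\<in>decks m n. Psi m n (hist G \<pi> (m*n))) \<le> real (card (decks m n)) * Psi m n []"
    by (rule supermart[OF finite_decks]) (rule Psi_step)
  moreover have "Psi m n (hist G \<pi> (m*n)) = real (cnt snd (hist G \<pi> (m*n)))" for \<pi>
    by (simp add: Psi_def)
  ultimately show ?thesis by (simp add: Psi_nil)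
qed



lemma alg:
  fixes m n \<epsilon> a0 a1 k0 k1 R0 R1 :: real
  assumes e0: "0 < \<epsilon>" and e1: "\<epsilon> \<le> 1/4" and m1: "m \<ge> 1" and n1: "n \<ge> 1" and emn: "\<epsilon>*m*n \<ge> 8"
    and a00: "0 \<le> a0" and a0: "a0 < \<epsilon>*m*n + 1" and a01: "a0 \<le> a1" and a1: "a1 < (1-\<epsilon>)*m*n + 1"
    and R0: "0 \<le> R0" and R01: "R0 \<le> R1" and R1: "R1 \<le> \<epsilon>^2/8*m*n"
    and k0: "0 \<le> k0" and k01: "k0 \<le> k1" and k1: "k1 \<le> m"
    and E: "k1 - k0 > (1+4*\<epsilon>)*(a1 - a0)/n + \<epsilon>^2*m"
  shows "(m - k0)/(m*n - a0 - R0) - (m - k1)/(m*n - a1 - R1) \<ge> \<epsilon>^2/(2*n)"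
proof -
  define N where "N = m*n"
  have N8: "\<epsilon>*N \<ge> 8" using emn by (simp add: N_def mult.assoc)
  have Npos: "N > 0" using m1 n1 by (simp add: N_def)
  define U0 where "U0 = m*n - a0 - R0"
  define U1 where "U1 = m*n - a1 - R1"
  define D0 where "D0 = (m - k0)/U0"
  define D1 where "D1 = (m - k1)/U1"
  have ee: "\<epsilon>^2 \<le> \<epsilon>/4" using e0 e1 by (simp add: power2_eq_square mult_left_mono)
  have ee3: "\<epsilon>^2 * \<epsilon> \<le> \<epsilon>/16"
  proof -
    have "\<epsilon>^2 * \<epsilon> \<le> (\<epsilon>/4) * \<epsilon>" using ee e0 by (intro mult_right_mono) auto
    also have "\<dots> = \<epsilon>^2/4" by (simp add: power2_eq_square)
    also have "\<dots> \<le> (\<epsilon>/4)/4" using ee by simp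
    finally show ?thesis by simp
  qed
  have key: "\<epsilon> - 2*\<epsilon>^2 - \<epsilon>^2/8 - 2*\<epsilon>*(\<epsilon>^2/8) \<ge> \<epsilon>/4"
  proof -
    have "2*\<epsilon>*(\<epsilon>^2/8) = (\<epsilon>^2*\<epsilon>)/4" by (simp add: algebra_simps)
    then show ?thesis using ee ee3 e0 by linarith
  qed
  have R1N: "R1 \<le> \<epsilon>^2/8 * N" using R1 by (simp add: N_def)
  have U0lb: "U0 > N*(1 - \<epsilon> - \<epsilon>^2/8) - 1" using a0 R01 R1N unfolding U0_def N_def by (simp add: algebra_simps)
  have U0pos: "U0 > 0"
  proof -
    have "N*(1 - \<epsilon> - \<epsilon>^2/8) \<ge> N * (1/2)" using Npos e1 ee by (intro mult_left_mono) auto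
    moreover have "N * (1/2) \<ge> 4"
    proof -
      have "\<epsilon>*N \<le> (1/4)*N" using e1 Npos by (intro mult_right_mono) auto
      then show ?thesis using N8 by linarith
    qed
    ultimately show ?thesis using U0lb by linarith
  qed
  have U0big: "(1 + 2*\<epsilon>) * U0 \<ge> N"
  proof -
    have c1: "(1 + 2*\<epsilon>) * U0 \<ge> (1 + 2*\<epsilon>) * (N*(1 - \<epsilon> - \<epsilon>^2/8) - 1)"
      using U0lb e0 by (intro mult_left_mono) auto
    have c2: "(1 + 2*\<epsilon>) * (N*(1 - \<epsilon> - \<epsilon>^2/8) - 1) = N + N*(\<epsilon> - 2*\<epsilon>^2 - \<epsilon>^2/8 - 2*\<epsilon>*(\<epsilon>^2/8)) - (1 + 2*\<epsilon>)"
      by (simp add: algebra_simps power2_eq_square)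
    have c3: "N*(\<epsilon> - 2*\<epsilon>^2 - \<epsilon>^2/8 - 2*\<epsilon>*(\<epsilon>^2/8)) \<ge> N*(\<epsilon>/4)" using key Npos by (intro mult_left_mono) auto
    have c4: "N*(\<epsilon>/4) \<ge> 1 + 2*\<epsilon>" using N8 e1 by (simp add: algebra_simps)
    show ?thesis using c1 c2 c3 c4 by linarith
  qed
  have D0ub: "D0 \<le> (1 + 2*\<epsilon>)/n"
  proof -
    have "D0 \<le> m / U0" unfolding D0_def using k0 U0pos by (intro divide_right_mono) auto
    also have "m / U0 \<le> (1 + 2*\<epsilon>)/n"
      using U0big U0pos n1 by (simp add: field_simps N_def mult.commute)
    finally show ?thesis .
  qed
  have D00: "D0 \<ge> 0" unfolding D0_def using k01 k1 U0pos by simp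
  have U1lb: "U1 > N*(\<epsilon> - \<epsilon>^2/8) - 1" using a1 R1N unfolding U1_def N_def by (simp add: algebra_simps)
  have U1pos: "U1 > 0"
  proof -
    have "N*(\<epsilon> - \<epsilon>^2/8) \<ge> N * (\<epsilon>/2)" using Npos ee e0 by (intro mult_left_mono) auto
    then show ?thesis using U1lb N8 by (simp add: algebra_simps)
  qed
  have U1N: "U1 \<le> N"
  proof -
    have "a1 \<ge> 0" using a01 a00 by simp
    then show ?thesis using R0 R01 unfolding U1_def N_def by simp
  qed
  define b where "b = a1 - a0"
  define Y where "Y = k1 - k0"
  have b0: "b \<ge> 0" using a01 by (simp add: b_def)
  have ident: "Y - D0 * b = U1 * (D0 - D1) + D0 * (R1 - R0)"
  proof -
    have "D0 * U0 = m - k0" unfolding D0_def using U0pos by simp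
    moreover have "D1 * U1 = m - k1" unfolding D1_def using U1pos by simp
    ultimately show ?thesis unfolding Y_def b_def U0_def U1_def by (simp add: algebra_simps)
  qed
  have "(1+4*\<epsilon>)*b/n \<ge> D0 * b"
  proof -
    have "(1 + 2*\<epsilon>)/n \<le> (1+4*\<epsilon>)/n" using e0 n1 by (intro divide_right_mono) auto
    then have "D0 \<le> (1+4*\<epsilon>)/n" using D0ub by linarith
    then have "D0 * b \<le> (1+4*\<epsilon>)/n * b" using b0 by (intro mult_right_mono) auto
    then show ?thesis by simp
  qed
  then have YD: "Y - D0 * b > \<epsilon>^2 * m" using E by (simp add: Y_def b_def)
  have DR: "D0 * (R1 - R0) \<le> \<epsilon>^2 * m / 2"
  proof -
    have "D0 * (R1 - R0) \<le> ((1 + 2*\<epsilon>)/n) * (\<epsilon>^2/8 * N)"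
      using D0ub D00 R0 R01 R1N by (intro mult_mono) auto
    also have "\<dots> = (1 + 2*\<epsilon>) * \<epsilon>^2 * m / 8" using n1 by (simp add: N_def field_simps)
    also have "\<dots> \<le> (3/2) * \<epsilon>^2 * m / 8" using e1 m1 by (intro divide_right_mono mult_right_mono) auto
    also have "\<dots> \<le> \<epsilon>^2 * m / 2" using m1 by simp
    finally show ?thesis .
  qed
  have "U1 * (D0 - D1) > \<epsilon>^2 * m / 2" using ident YD DR by linarith
  then have "D0 - D1 > \<epsilon>^2 * m / (2 * U1)" using U1pos by (simp add: field_simps)
  moreover have "\<epsilon>^2 * m / (2 * U1) \<ge> \<epsilon>^2 * m / (2 * N)" using U1pos U1N m1 by (intro divide_left_mono) auto
  moreover have "\<epsilon>^2 * m / (2 * N) = \<epsilon>^2/(2*n)" using m1 by (simp add: N_def field_simps)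
  ultimately show ?thesis unfolding D0_def D1_def U0_def U1_def by linarith
qed



lemma cnt_take: "s \<le> length h \<Longrightarrow> cnt P (take s h) = card {r. r < s \<and> P (h ! r)}"
  unfolding cnt_def by (rule arg_cong[where f=card]) auto

lemma guess_count_cnt: "guess_count i h = cnt (\<lambda>x. fst x = i) h"
  unfolding guess_count_def cnt_def length_filter_conv_card by (simp add: split_beta)

lemma card_lt_mono: assumes "(s::nat) \<le> s'" shows "card {r. r < s \<and> P r} \<le> card {r. r < s' \<and> P r}"
  using assms by (intro card_mono) auto

lemma card_lt_Suc: "card {r::nat. r < Suc s \<and> P r} \<le> card {r. r < s \<and> P r} + 1"
proof -
  have "{r. r < Suc s \<and> P r} \<subseteq> insert s {r. r < s \<and> P r}" by auto
  then have "card {r. r < Suc s \<and> P r} \<le> card (insert s {r. r < s \<and> P r})" by (intro card_mono) auto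
  also have "\<dots> \<le> card {r. r < s \<and> P r} + 1" by (simp add: card_insert_if)
  finally show ?thesis .
qed

lemma card_lt_split: "(lo::nat) \<le> Suc hi \<Longrightarrow>
  card {r. r < Suc hi \<and> P r} = card {r. r < lo \<and> P r} + card {r\<in>{lo..hi}. P r}"
proof -
  assume a: "lo \<le> Suc hi"
  have "{r. r < Suc hi \<and> P r} = {r. r < lo \<and> P r} \<union> {r\<in>{lo..hi}. P r}" using a by auto
  then show ?thesis by (simp add: card_Un_disjoint disjoint_iff)
qed

lemma det:
  fixes G :: strategy and \<epsilon> \<theta> \<beta> Rmax :: real
  assumes \<pi>: "\<pi> \<in> decks m n" and hdef: "h = hist G \<pi> (m*n)" and i: "i < n"
    and RRh: "real (RR i h) \<le> Rmax" and Rmax: "Rmax = \<epsilon>^2/8*m*n"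
    and e0: "0 < \<epsilon>" and e1: "\<epsilon> \<le> 1/4" and m1: "m \<ge> 1" and n1: "n \<ge> 1" and emn: "\<epsilon>*m*n \<ge> 8"
    and th0: "0 \<le> \<theta>" and b0: "0 \<le> \<beta>"
    and E: "real (Y_crit \<epsilon> m n i h) > (1 + 4*\<epsilon>) * real (b_crit \<epsilon> m n i h) / real n + \<epsilon>^2 * real m"
  shows "(\<Sum>s<length h. ww m n i \<epsilon> \<theta> \<beta> Rmax (take s h) (h!s)) \<ge> \<theta> * (\<epsilon>^2/(2*real n)) - \<theta>^2*\<beta>*(m*n)"
proof -
  define L where "L = m*n"
  have lenh: "length h = L" by (simp add: hdef L_def)
  define A where "A s = card {r. r < s \<and> fst (h!r) = i}" for s
  define K where "K s = card {r. r < s \<and> h!r = (i,True)}" for s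
  define Rs where "Rs s = card {r. r < s \<and> snd (h!r) \<and> fst (h!r) \<noteq> i}" for s
  define D where "D s = DD m n i (take s h)" for s
  have aaA: "aa i (take s h) = A s" if "s \<le> L" for s using that lenh by (simp add: aa_def A_def cnt_take)
  have kkK: "kk i (take s h) = K s" if "s \<le> L" for s using that lenh by (simp add: kk_def K_def cnt_take)
  have RRR: "RR i (take s h) = Rs s" if "s \<le> L" for s using that lenh by (simp add: RR_def Rs_def cnt_take)
  have Dform: "D s = (real m - real (K s)) / (real (m*n) - real (A s) - real (Rs s))" if "s \<le> L" for s
    using that by (simp add: D_def DD_def UU_def aaA kkK RRR)
  have RsL: "Rs L \<le> Rmax" using RRh RRR[of L] lenh by simp
  have Rs_le: "real (Rs s) \<le> Rmax" if "s \<le> L" for s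
    using RsL card_lt_mono[OF that, of "\<lambda>r. snd (h!r) \<and> fst (h!r) \<noteq> i"] unfolding Rs_def
    by linarith
  define J where "J = {s. s < L \<and> \<epsilon>*m*n \<le> real (A s) \<and> real (A s) < (1-\<epsilon>)*m*n}"
  have actJ: "act m n i \<epsilon> Rmax (take s h) \<longleftrightarrow> s \<in> J" if "s < L" for s
    using that Rs_le[of s] by (auto simp: act_def J_def aaA RRR)
  have critJ: "critical \<epsilon> m n i h s \<longleftrightarrow> s \<in> J \<and> fst (h!s) = i" for s
  proof -
    have "s < L \<Longrightarrow> guess_count i (take s h) = A s" using aaA[of s] by (simp add: guess_count_cnt aa_def)
    then show ?thesis unfolding critical_def J_def using lenh by auto
  qed
  have bJ: "b_crit \<epsilon> m n i h = card {s\<in>J. fst (h!s) = i}"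
    unfolding b_crit_def using critJ by (metis (no_types, lifting) Collect_cong mem_Collect_eq)
  have YJ: "Y_crit \<epsilon> m n i h = card {s\<in>J. h!s = (i,True)}"
  proof -
    have "{t. critical \<epsilon> m n i h t \<and> snd (h ! t)} = {s\<in>J. h!s = (i,True)}"
      using critJ by (auto simp: prod_eq_iff)
    then show ?thesis by (simp add: Y_crit_def)
  qed
  have finJ: "finite J" by (simp add: J_def)
  have JL: "J \<subseteq> {..<L}" by (auto simp: J_def)
  have Jne: "J \<noteq> {}"
  proof
    assume "J = {}"
    then have "Y_crit \<epsilon> m n i h = 0" "b_crit \<epsilon> m n i h = 0" using YJ bJ by auto
    moreover have nn: "\<epsilon>^2 * real m \<ge> 0" by simp
    ultimately show False using E by (simp del: zero_le_mult_iff) (use nn in linarith)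
  qed
  define lo where "lo = Min J"
  define hi where "hi = Max J"
  have loJ: "lo \<in> J" and hiJ: "hi \<in> J" using finJ Jne by (auto simp: lo_def hi_def)
  have lohi: "lo \<le> hi" using finJ Jne by (simp add: lo_def hi_def)
  have hiL: "hi < L" using hiJ by (simp add: J_def)
  have Amono: "A s \<le> A s'" if "s \<le> s'" for s s' unfolding A_def by (rule card_lt_mono[OF that])
  have Kmono: "K s \<le> K s'" if "s \<le> s'" for s s' unfolding K_def by (rule card_lt_mono[OF that])
  have Rmono: "Rs s \<le> Rs s'" if "s \<le> s'" for s s' unfolding Rs_def by (rule card_lt_mono[OF that])
  have Jint: "J = {lo..hi}"
  proof
    show "J \<subseteq> {lo..hi}" using finJ by (auto simp: lo_def hi_def)
    show "{lo..hi} \<subseteq> J"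
    proof
      fix s assume s: "s \<in> {lo..hi}"
      then have "A lo \<le> A s" "A s \<le> A hi" using Amono by auto
      then show "s \<in> J" using loJ hiJ s hiL by (auto simp: J_def)
    qed
  qed
  have emn0: "\<epsilon>*m*n > 0" using emn by simp
  have lo0: "lo > 0"
  proof (rule ccontr)
    assume "\<not> lo > 0"
    then have "lo = 0" by simp
    then have "A lo = 0" by (simp add: A_def)
    then show False using loJ emn0 by (simp add: J_def)
  qed
  have Alo: "real (A lo) < \<epsilon>*m*n + 1"
  proof -
    have "lo - 1 \<notin> J" using lo0 finJ by (metis Jint atLeastAtMost_iff diff_less less_numeral_extra(1) not_le)
    moreover have "lo - 1 < L" using loJ unfolding J_def by auto
    moreover have "real (A (lo-1)) < (1-\<epsilon>)*m*n"
    proof -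
      have "real (A (lo-1)) \<le> real (A lo)" using Amono[of "lo-1" lo] by simp
      then show ?thesis using loJ unfolding J_def by simp
    qed
    ultimately have "real (A (lo-1)) < \<epsilon>*m*n" by (auto simp: J_def)
    moreover have "A lo \<le> A (lo-1) + 1" using card_lt_Suc[of "lo-1"] lo0 by (simp add: A_def)
    ultimately show ?thesis by linarith
  qed
  have Ahi: "real (A (Suc hi)) < (1-\<epsilon>)*m*n + 1"
  proof -
    have "A (Suc hi) \<le> A hi + 1" using card_lt_Suc[of hi] by (simp add: A_def)
    then have "real (A (Suc hi)) \<le> real (A hi) + 1" by simp
    then show ?thesis using hiJ unfolding J_def by simp
  qed
  have bform: "b_crit \<epsilon> m n i h = A (Suc hi) - A lo"
    using card_lt_split[of lo hi "\<lambda>r. fst (h!r) = i"] lohi bJ Jint by (simp add: A_def)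
  have Yform: "Y_crit \<epsilon> m n i h = K (Suc hi) - K lo"
    using card_lt_split[of lo hi "\<lambda>r. h!r = (i,True)"] lohi YJ Jint by (simp add: K_def)
  have KL: "K L \<le> m"
  proof -
    have "{r. r < L \<and> h!r = (i,True)} \<subseteq> {s. s < m*n \<and> \<pi> ! s = i}"
      using hist_nth[of _ "m*n" G \<pi>] by (auto simp: hdef L_def)
    then have "K L \<le> card {s. s < m*n \<and> \<pi> ! s = i}" unfolding K_def by (intro card_mono) auto
    then show ?thesis using decks_count[OF \<pi> i] by simp
  qed
  have sL: "Suc hi \<le> L" using hiL by simp
  have main: "D lo - D (Suc hi) \<ge> \<epsilon>^2/(2*real n)"
  proof -
    have "(real m - real (K lo))/(real m * real n - real (A lo) - real (Rs lo))
       - (real m - real (K (Suc hi)))/(real m * real n - real (A (Suc hi)) - real (Rs (Suc hi))) \<ge> \<epsilon>^2/(2*real n)"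
    proof (rule alg[OF e0 e1 _ _ emn])
      show "1 \<le> real m" "1 \<le> real n" using m1 n1 by auto
      show "0 \<le> real (A lo)" by simp
      show "real (A lo) < \<epsilon> * real m * real n + 1" using Alo by simp
      show "real (A lo) \<le> real (A (Suc hi))" using Amono lohi by simp
      show "real (A (Suc hi)) < (1 - \<epsilon>) * real m * real n + 1" using Ahi by simp
      show "0 \<le> real (Rs lo)" by simp
      show "real (Rs lo) \<le> real (Rs (Suc hi))" using Rmono lohi by simp
      show "real (Rs (Suc hi)) \<le> \<epsilon>\<^sup>2 / 8 * real m * real n" using Rs_le[OF sL] Rmax by simp
      show "0 \<le> real (K lo)" by simp
      show "real (K lo) \<le> real (K (Suc hi))" using Kmono lohi by simp
      show "real (K (Suc hi)) \<le> real m" using Kmono[OF sL] KL by simp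
      show "(1 + 4 * \<epsilon>) * (real (A (Suc hi)) - real (A lo)) / real n + \<epsilon>\<^sup>2 * real m < real (K (Suc hi)) - real (K lo)"
        using E bform Yform Amono[of lo "Suc hi"] Kmono[of lo "Suc hi"] lohi by (simp add: of_nat_diff)
    qed
    then show ?thesis using Dform[of lo] Dform[OF sL] lohi hiL by simp
  qed
  have wsum: "ww m n i \<epsilon> \<theta> \<beta> Rmax (take s h) (h!s) =
      (if s \<in> J then -\<theta>*(D (Suc s) - D s) - (if fst (h!s) = i then \<theta>^2*\<beta> else 0) else 0)" if "s < L" for s
    using that actJ[OF that] lenh by (simp add: ww_def D_def take_Suc_conv_app_nth)
  have "(\<Sum>s<length h. ww m n i \<epsilon> \<theta> \<beta> Rmax (take s h) (h!s))
      = (\<Sum>s<L. (if s \<in> J then -\<theta>*(D (Suc s) - D s) - (if fst (h!s) = i then \<theta>^2*\<beta> else 0) else 0))"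
    using wsum lenh by (intro sum.cong) auto
  also have "\<dots> = (\<Sum>s\<in>J. -\<theta>*(D (Suc s) - D s) - (if fst (h!s) = i then \<theta>^2*\<beta> else 0))"
    using JL by (simp add: sum.If_cases Int_absorb1)
  also have "\<dots> = (\<Sum>s\<in>J. -\<theta>*(D (Suc s) - D s)) - (\<Sum>s\<in>J. (if fst (h!s) = i then \<theta>^2*\<beta> else 0))"
    by (rule sum_subtractf)
  also have "(\<Sum>s\<in>J. -\<theta>*(D (Suc s) - D s)) = -\<theta> * (\<Sum>s\<in>J. (D (Suc s) - D s))"
    by (rule sum_distrib_left[symmetric])
  also have "(\<Sum>s\<in>J. (if fst (h!s) = i then \<theta>^2*\<beta> else 0)) = \<theta>^2*\<beta> * real (card {s\<in>J. fst (h!s) = i})"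
  proof -
    have "(\<Sum>s\<in>J. (if fst (h!s) = i then \<theta>^2*\<beta> else 0)) = (\<Sum>s\<in>{s\<in>J. fst (h!s) = i}. \<theta>^2*\<beta>)"
      using sum.inter_filter[OF finJ, of "\<lambda>_. \<theta>^2*\<beta>" "\<lambda>s. fst (h!s) = i"] by simp
    then show ?thesis by simp
  qed
  also have "(\<Sum>s\<in>J. (D (Suc s) - D s)) = D (Suc hi) - D lo"
    unfolding Jint by (rule sum_Suc_diff) (use lohi in simp)
  finally have S: "(\<Sum>s<length h. ww m n i \<epsilon> \<theta> \<beta> Rmax (take s h) (h!s))
      = \<theta> * (D lo - D (Suc hi)) - \<theta>^2*\<beta> * real (b_crit \<epsilon> m n i h)" using bJ by (simp add: algebra_simps)
  have "b_crit \<epsilon> m n i h \<le> L"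
  proof -
    have "card {s\<in>J. fst (h!s) = i} \<le> card {..<L}" using JL by (intro card_mono) auto
    then show ?thesis using bJ by simp
  qed
  then have "real (b_crit \<epsilon> m n i h) \<le> real (m*n)" unfolding L_def by (simp only: of_nat_le_iff)
  then have "\<theta>^2*\<beta> * real (b_crit \<epsilon> m n i h) \<le> \<theta>^2*\<beta>*(m*n)"
    using b0 by (intro mult_left_mono) auto
  moreover have "\<theta> * (D lo - D (Suc hi)) \<ge> \<theta> * (\<epsilon>^2/(2*real n))" using main th0 by (intro mult_left_mono) auto
  ultimately show ?thesis using S by linarith
qed



lemma decks_nonempty: "decks m n \<noteq> {}"
proof (induction n)
  case 0
  have "[] \<in> decks m 0" by (simp add: decks_def)
  then show ?case by auto
next
  case (Suc n)
  then obtain \<pi> where \<pi>: "\<pi> \<in> decks m n" by auto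
  have "\<pi> @ replicate m n \<in> decks m (Suc n)"
  proof -
    have "length (\<pi> @ replicate m n) = m * Suc n" using \<pi> by (simp add: decks_def)
    moreover have "set (\<pi> @ replicate m n) \<subseteq> {..<Suc n}" using \<pi> by (auto simp: decks_def)
    moreover have "count_list (\<pi> @ replicate m n) j = m" if "j < Suc n" for j
    proof (cases "j = n")
      case True
      have "count_list \<pi> n = 0" using \<pi> by (auto simp: decks_def count_list_0_iff)
      then show ?thesis using True by (simp add: count_list_eq_length_filter filter_replicate del: count_list_0_iff)
    next
      case False
      then have "j < n" using that by simp
      then show ?thesis using \<pi> False by (simp add: decks_def count_list_eq_length_filter filter_replicate)
    qed
    ultimately show ?thesis by (simp add: decks_def)
  qed
  then show ?case by auto
qed

lemma markov_card:
  fixes f :: "'a \<Rightarrow> real"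
  assumes "finite S" "\<And>x. x \<in> S \<Longrightarrow> f x \<ge> 0" "a > 0"
  shows "real (card {x\<in>S. a \<le> f x}) * a \<le> (\<Sum>x\<in>S. f x)"
proof -
  have "real (card {x\<in>S. a \<le> f x}) * a = (\<Sum>x\<in>{x\<in>S. a \<le> f x}. a)" by simp
  also have "\<dots> \<le> (\<Sum>x\<in>{x\<in>S. a \<le> f x}. f x)" by (rule sum_mono) auto
  also have "\<dots> \<le> (\<Sum>x\<in>S. f x)" using assms by (intro sum_mono2) auto
  finally show ?thesis .
qed

lemma lim_part:
  fixes m :: nat and e X :: real
  assumes "m \<ge> 1" "e > 0" "X > 0"
  shows "\<exists>N. \<forall>n\<ge>N. 8 * (ln (real m * real n) + 1) / (e^2 * real n) \<le> X"
proof -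
  have l1: "(\<lambda>n. ln (real n) / real n) \<longlonglongrightarrow> 0"
    by (rule filterlim_compose[OF ln_x_over_x_tendsto_0 filterlim_real_sequentially])
  have l2: "(\<lambda>n. 1 / real n) \<longlonglongrightarrow> 0" by (rule lim_const_over_n)
  have l3: "(\<lambda>n. (8 / e^2) * ((ln (real m) + 1) * (1 / real n) + ln (real n) / real n)) \<longlonglongrightarrow> (8 / e^2) * ((ln (real m) + 1) * 0 + 0)"
    by (intro tendsto_intros l1 l2)
  then have "eventually (\<lambda>n. (8 / e^2) * ((ln (real m) + 1) * (1 / real n) + ln (real n) / real n) < X) sequentially"
    using assms(3) by (intro order_tendstoD(2)) auto
  moreover have "eventually (\<lambda>n. n \<ge> (1::nat)) sequentially" by (rule eventually_ge_at_top)
  ultimately have "eventually (\<lambda>n. 8 * (ln (real m * real n) + 1) / (e^2 * real n) \<le> X) sequentially"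
  proof (rule eventually_elim2)
    fix n :: nat assume a: "(8 / e^2) * ((ln (real m) + 1) * (1 / real n) + ln (real n) / real n) < X" and n: "n \<ge> 1"
    have "ln (real m * real n) = ln (real m) + ln (real n)" using n assms(1) by (simp add: ln_mult)
    then have "8 * (ln (real m * real n) + 1) / (e^2 * real n) = (8 / e^2) * ((ln (real m) + 1) * (1 / real n) + ln (real n) / real n)"
      using n assms(2) by (simp add: field_simps)
    then show "8 * (ln (real m * real n) + 1) / (e^2 * real n) \<le> X" using a by simp
  qed
  then show ?thesis by (simp add: eventually_sequentially)
qed

lemma params:
  fixes \<epsilon> M Nn :: real
  assumes e0: "0 < \<epsilon>" and e1: "\<epsilon> \<le> 1/4" and M1: "M \<ge> 1" and N1: "Nn \<ge> 1" and x64: "\<epsilon>*M*Nn \<ge> 64"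
  shows "1 < \<epsilon>*M*Nn - \<epsilon>^2/8*M*Nn"
    and "\<epsilon>^5*M*Nn/256 \<le> \<epsilon>*M*Nn - \<epsilon>^2/8*M*Nn - 1"
    and "\<epsilon>^5*M*Nn/256 * (\<epsilon>^2/(2*Nn)) - (\<epsilon>^5*M*Nn/256)^2 * (2*M/((\<epsilon>*M*Nn - \<epsilon>^2/8*M*Nn) * (\<epsilon>*M*Nn - \<epsilon>^2/8*M*Nn - 1)^2)) * (M*Nn) \<ge> \<epsilon>^7/1024 * M"
proof -
  define x where "x = \<epsilon>*M*Nn"
  define V where "V = \<epsilon>*M*Nn - \<epsilon>^2/8*M*Nn"
  have x64': "x \<ge> 64" using x64 by (simp add: x_def)
  have xpos: "x > 0" using x64' by simp
  have MN: "M*Nn = x/\<epsilon>" using e0 by (simp add: x_def)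
  have Vx: "V = x - \<epsilon>*x/8" by (simp add: V_def x_def power2_eq_square algebra_simps)
  have V1: "V \<ge> 31*x/32"
  proof -
    have "\<epsilon>*x \<le> x/4" using e1 xpos by (simp add: mult_right_mono)
    then show ?thesis using Vx by simp
  qed
  have V2: "V - 1 \<ge> x/2" using V1 x64' by linarith
  have "1 < V" using V1 x64' by linarith
  then show "1 < \<epsilon>*M*Nn - \<epsilon>^2/8*M*Nn" by (simp add: V_def)
  have e4: "\<epsilon>^4 \<le> 1" using e0 e1 by (simp add: power_le_one)
  have e5: "\<epsilon>^5 = \<epsilon> * \<epsilon>^4" by (simp add: eval_nat_numeral)
  have th: "\<epsilon>^5*M*Nn/256 = \<epsilon>^4 * x / 256" unfolding x_def e5 by (simp add: algebra_simps)
  have "\<epsilon>^4 * x / 256 \<le> x/2" using e4 xpos by (simp add: mult_right_mono_neg)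
  then have g: "\<epsilon>^5*M*Nn/256 \<le> V - 1" using th V2 by linarith
  then show "\<epsilon>^5*M*Nn/256 \<le> \<epsilon>*M*Nn - \<epsilon>^2/8*M*Nn - 1" by (simp only: V_def)
  have VV: "V * (V-1)^2 \<ge> x^3/8"
  proof -
    have "V * (V-1)^2 \<ge> (31*x/32) * (x/2)^2" using V1 V2 xpos by (intro mult_mono power_mono) auto
    moreover have "(31*x/32) * (x/2)^2 \<ge> x^3/8" using xpos by (simp add: power2_eq_square power3_eq_cube field_simps)
    ultimately show ?thesis by linarith
  qed
  have Vpos: "V * (V-1)^2 > 0"
  proof -
    have "x^3/8 > 0" using xpos by simp
    then show ?thesis using VV by linarith
  qed
  have b: "2*M/(V*(V-1)^2) \<le> 16*M/x^3"
  proof -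
    have "2*M/(V*(V-1)^2) \<le> 2*M/(x^3/8)" using VV Vpos xpos M1 by (intro divide_left_mono) auto
    then show ?thesis by simp
  qed
  have t1: "\<epsilon>^5*M*Nn/256 * (\<epsilon>^2/(2*Nn)) = \<epsilon>^7 * M / 512"
    using N1 by (simp add: field_simps power_add[symmetric] eval_nat_numeral)
  have t2: "(\<epsilon>^5*M*Nn/256)^2 * (2*M/(V*(V-1)^2)) * (M*Nn) \<le> \<epsilon>^7 * M / 4096"
  proof -
    have "(\<epsilon>^5*M*Nn/256)^2 * (2*M/(V*(V-1)^2)) * (M*Nn) \<le> (\<epsilon>^4 * x / 256)^2 * (16*M/x^3) * (x/\<epsilon>)"
      unfolding th MN using b xpos e0 by (intro mult_right_mono mult_left_mono) auto
    also have "\<dots> = \<epsilon>^7 * M / 4096" using xpos e0 by (simp add: field_simps power2_eq_square power3_eq_cube eval_nat_numeral)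
    finally show ?thesis .
  qed
  show "\<epsilon>^5*M*Nn/256 * (\<epsilon>^2/(2*Nn)) - (\<epsilon>^5*M*Nn/256)^2 * (2*M/((\<epsilon>*M*Nn - \<epsilon>^2/8*M*Nn) * (\<epsilon>*M*Nn - \<epsilon>^2/8*M*Nn - 1)^2)) * (M*Nn) \<ge> \<epsilon>^7/1024 * M"
  proof -
    have p: "\<epsilon>^7 * M \<ge> 0" using e0 M1 by simp
    have "\<epsilon>^5*M*Nn/256 * (\<epsilon>^2/(2*Nn)) - (\<epsilon>^5*M*Nn/256)^2 * (2*M/(V*(V-1)^2)) * (M*Nn) \<ge> \<epsilon>^7/1024 * M"
      using t1 t2 p by linarith
    then show ?thesis by (simp only: V_def)
  qed
qed

lemma main_fixed_m:
  fixes \<epsilon> :: real and m :: nat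
  assumes e0: "0 < \<epsilon>" and e1: "\<epsilon> \<le> 1/4"
  shows "\<exists>N::nat. \<forall>n\<ge>N. \<forall>(G::strategy) (i::nat).
       (\<forall>h. G h < n) \<longrightarrow> i < n \<longrightarrow>
       measure_pmf.prob (pmf_of_set (decks m n))
         {\<pi>. real (Y_crit \<epsilon> m n i (full_hist G m n \<pi>)) >
              (1 + 4 * \<epsilon>) * real (b_crit \<epsilon> m n i (full_hist G m n \<pi>)) / real n
              + \<epsilon>^2 * real m}
       \<le> 2 * exp (- (\<epsilon>^7/1024) * real m)"
proof (cases "m = 0")
  case True
  have "{\<pi>. real (Y_crit \<epsilon> m n i (full_hist G m n \<pi>)) >
              (1 + 4 * \<epsilon>) * real (b_crit \<epsilon> m n i (full_hist G m n \<pi>)) / real n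
              + \<epsilon>^2 * real m} = {}" for n G i
    using True by (simp add: full_hist_def Y_crit_def b_crit_def critical_def)
  then show ?thesis by simp
next
  case False
  then have m1: "m \<ge> 1" by simp
  define c0 where "c0 = \<epsilon>^7/1024"
  obtain N1 where N1: "\<forall>n\<ge>N1. 8 * (ln (real m * real n) + 1) / (\<epsilon>^2 * real n) \<le> exp (- c0 * real m)"
    using lim_part[OF m1 e0, of "exp (- c0 * real m)"] by auto
  define N2 where "N2 = nat \<lceil>64 / \<epsilon>\<rceil> + 1"
  show ?thesis
  proof (intro exI[of _ "max N1 N2"] allI impI)
    fix n :: nat and G :: strategy and i :: nat
    assume n: "max N1 N2 \<le> n" and Gn: "\<forall>h. G h < n" and i: "i < n"
    have n1: "n \<ge> 1" using n by (simp add: N2_def)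
    have emn: "\<epsilon> * real m * real n \<ge> 64"
    proof -
      have "real n \<ge> 64 / \<epsilon>" using n by (simp add: N2_def) linarith
      then have "\<epsilon> * real n \<ge> 64" using e0 by (simp add: field_simps)
      moreover have "\<epsilon> * real m * real n \<ge> \<epsilon> * 1 * real n" using m1 e0 n1 by (intro mult_right_mono mult_left_mono) auto
      ultimately show ?thesis by simp
    qed
    define \<Omega> where "\<Omega> = decks m n"
    have finO: "finite \<Omega>" and neO: "\<Omega> \<noteq> {}" by (simp_all add: \<Omega>_def finite_decks decks_nonempty)
    define Rmax where "Rmax = \<epsilon>^2/8*real m*real n"
    define \<theta> where "\<theta> = \<epsilon>^5*real m*real n/256"
    define \<beta> where "\<beta> = 2*real m/((\<epsilon>*real m*real n - Rmax) * (\<epsilon>*real m*real n - Rmax - 1)^2)"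
    have P1: "1 < \<epsilon>*real m*real n - Rmax" and P2: "\<theta> \<le> \<epsilon>*real m*real n - Rmax - 1"
      and P3: "\<theta> * (\<epsilon>^2/(2*real n)) - \<theta>^2 * \<beta> * (real m * real n) \<ge> c0 * real m"
      using params[OF e0 e1, of "real m" "real n"] m1 n1 emn
      by (simp_all add: Rmax_def \<theta>_def \<beta>_def c0_def)
    have th0: "\<theta> \<ge> 0" using e0 by (simp add: \<theta>_def)
    have b0: "\<beta> \<ge> 0" using P1 by (simp add: \<beta>_def)
    have Rpos: "Rmax > 0" using e0 m1 n1 by (simp add: Rmax_def)
    define S where "S = {\<pi>. real (Y_crit \<epsilon> m n i (full_hist G m n \<pi>)) >
              (1 + 4 * \<epsilon>) * real (b_crit \<epsilon> m n i (full_hist G m n \<pi>)) / real n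
              + \<epsilon>^2 * real m}"
    define A1 where "A1 = {\<pi>\<in>\<Omega>. Rmax \<le> real (cnt snd (hist G \<pi> (m*n)))}"
    define A2 where "A2 = {\<pi>\<in>\<Omega>. exp (c0 * real m) \<le> Phi m n i \<epsilon> \<theta> \<beta> Rmax (hist G \<pi> (m*n))}"
    have sub: "\<Omega> \<inter> S \<subseteq> A1 \<union> A2"
    proof
      fix \<pi> assume \<pi>: "\<pi> \<in> \<Omega> \<inter> S"
      show "\<pi> \<in> A1 \<union> A2"
      proof (cases "real (RR i (hist G \<pi> (m*n))) \<le> Rmax")
        case False
        have "RR i (hist G \<pi> (m*n)) \<le> cnt snd (hist G \<pi> (m*n))"
          unfolding RR_def cnt_def by (intro card_mono) auto
        then have "Rmax \<le> real (cnt snd (hist G \<pi> (m*n)))" using False by linarith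
        then show ?thesis using \<pi> by (simp add: A1_def)
      next
        case True
        have "(\<Sum>s<length (hist G \<pi> (m*n)). ww m n i \<epsilon> \<theta> \<beta> Rmax (take s (hist G \<pi> (m*n))) ((hist G \<pi> (m*n))!s))
           \<ge> \<theta> * (\<epsilon>^2/(2*real n)) - \<theta>^2*\<beta>*(m*n)"
        proof (rule det[OF _ refl i True Rmax_def e0 e1 m1 n1 _ th0 b0])
          show "\<pi> \<in> decks m n" using \<pi> by (simp add: \<Omega>_def)
          show "8 \<le> \<epsilon> * real m * real n" using emn by simp
          show "(1 + 4 * \<epsilon>) * real (b_crit \<epsilon> m n i (hist G \<pi> (m * n))) / real n + \<epsilon>\<^sup>2 * real m
              < real (Y_crit \<epsilon> m n i (hist G \<pi> (m * n)))"
            using \<pi> by (simp add: S_def full_hist_def)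
        qed
        then have "c0 * real m \<le> (\<Sum>s<length (hist G \<pi> (m*n)). ww m n i \<epsilon> \<theta> \<beta> Rmax (take s (hist G \<pi> (m*n))) ((hist G \<pi> (m*n))!s))"
          using P3 by simp
        then have "exp (c0 * real m) \<le> Phi m n i \<epsilon> \<theta> \<beta> Rmax (hist G \<pi> (m*n))"
          unfolding Phi_def by simp
        then show ?thesis using \<pi> by (simp add: A2_def)
      qed
    qed
    have cardS: "real (card (\<Omega> \<inter> S)) \<le> real (card A1) + real (card A2)"
    proof -
      have "card (\<Omega> \<inter> S) \<le> card (A1 \<union> A2)" using sub finO by (intro card_mono) (auto simp: A1_def A2_def)
      also have "\<dots> \<le> card A1 + card A2" by (rule card_Un_le)
      finally show ?thesis by linarith
    qed
    have cO: "real (card \<Omega>) > 0" using finO neO by (simp add: card_gt_0_iff)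
    have bound1: "real (card A1) \<le> real (card \<Omega>) * exp (- c0 * real m)"
    proof -
      have "real (card A1) * Rmax \<le> (\<Sum>\<pi>\<in>\<Omega>. real (cnt snd (hist G \<pi> (m*n))))"
        unfolding A1_def by (rule markov_card[OF finO _ Rpos]) simp
      also have "\<dots> \<le> real (card \<Omega>) * (real m * harm (m*n))"
        unfolding \<Omega>_def by (rule expect_correct)
      finally have a: "real (card A1) * Rmax \<le> real (card \<Omega>) * (real m * harm (m*n))" .
      have mn1: "m*n \<ge> 1" using m1 n1 by simp
      have "harm (m*n) \<le> ln (real m * real n) + 1" using harm_le_ln[OF mn1] by simp
      then have "real m * harm (m*n) / Rmax \<le> real m * (ln (real m * real n) + 1) / Rmax"
        using Rpos by (intro divide_right_mono mult_left_mono) auto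
      also have "\<dots> = 8 * (ln (real m * real n) + 1) / (\<epsilon>^2 * real n)"
        using m1 e0 n1 by (simp add: Rmax_def field_simps)
      also have "\<dots> \<le> exp (- c0 * real m)" using N1 n by simp
      finally have b: "real m * harm (m*n) / Rmax \<le> exp (- c0 * real m)" .
      have "real (card A1) \<le> real (card \<Omega>) * (real m * harm (m*n)) / Rmax"
        using a Rpos by (simp add: field_simps)
      also have "\<dots> = real (card \<Omega>) * (real m * harm (m*n) / Rmax)" by simp
      also have "\<dots> \<le> real (card \<Omega>) * exp (- c0 * real m)" using b cO by (intro mult_left_mono) auto
      finally show ?thesis .
    qed
    have bound2: "real (card A2) \<le> real (card \<Omega>) * exp (- c0 * real m)"
    proof -
      have "real (card A2) * exp (c0 * real m) \<le> (\<Sum>\<pi>\<in>\<Omega>. Phi m n i \<epsilon> \<theta> \<beta> Rmax (hist G \<pi> (m*n)))"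
        unfolding A2_def by (rule markov_card[OF finO]) (auto intro: less_imp_le Phi_pos)
      also have "\<dots> \<le> real (card \<Omega>) * Phi m n i \<epsilon> \<theta> \<beta> Rmax []"
        unfolding \<Omega>_def
        by (rule supermart[OF finite_decks], rule Phi_step[OF _ _ i th0 P1 P2]) (auto simp: \<beta>_def)
      also have "\<dots> = real (card \<Omega>)" by (simp add: Phi_nil)
      finally have "real (card A2) * exp (c0 * real m) \<le> real (card \<Omega>)" .
      then show ?thesis by (simp add: exp_minus field_simps)
    qed
    have "measure_pmf.prob (pmf_of_set \<Omega>) S = real (card (\<Omega> \<inter> S)) / real (card \<Omega>)"
      using measure_pmf_of_set[OF neO finO] by simp
    also have "\<dots> \<le> (real (card \<Omega>) * exp (- c0 * real m) + real (card \<Omega>) * exp (- c0 * real m)) / real (card \<Omega>)"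
      using cardS bound1 bound2 cO by (intro divide_right_mono) auto
    also have "\<dots> = 2 * exp (- c0 * real m)" using cO by (simp add: field_simps)
    finally show "measure_pmf.prob (pmf_of_set (decks m n))
         {\<pi>. real (Y_crit \<epsilon> m n i (full_hist G m n \<pi>)) >
              (1 + 4 * \<epsilon>) * real (b_crit \<epsilon> m n i (full_hist G m n \<pi>)) / real n
              + \<epsilon>^2 * real m}
       \<le> 2 * exp (- (\<epsilon>^7/1024) * real m)" by (simp add: \<Omega>_def S_def c0_def)
  qed
qed

theorem lemma3p12:
  fixes \<epsilon> :: real
  assumes "0 < \<epsilon>" and "\<epsilon> \<le> 1/4"
  shows "\<exists>c c'. c > 0 \<and> c' > 0 \<and>
    (\<forall>m::nat. \<exists>N::nat. \<forall>n\<ge>N. \<forall>(G::strategy) (i::nat).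
       (\<forall>h. G h < n) \<longrightarrow> i < n \<longrightarrow>
       measure_pmf.prob (pmf_of_set (decks m n))
         {\<pi>. real (Y_crit \<epsilon> m n i (full_hist G m n \<pi>)) >
              (1 + 4 * \<epsilon>) * real (b_crit \<epsilon> m n i (full_hist G m n \<pi>)) / real n
              + \<epsilon>^2 * real m}
       \<le> c' * \<epsilon> powr (-2) * exp (- c * \<epsilon>^4 * real m))"
proof -
  have c1: "2*\<epsilon>^2 * \<epsilon> powr (-2) = 2"
    using assms by (simp add: powr_minus powr_realpow)
  have c2: "- (\<epsilon>^3/1024) * \<epsilon>^4 * real m = - (\<epsilon>^7/1024) * real m" for m :: nat
    by (simp add: power_add[symmetric])
  have H: "\<forall>m::nat. \<exists>N::nat. \<forall>n\<ge>N. \<forall>(G::strategy) (i::nat).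
       (\<forall>h. G h < n) \<longrightarrow> i < n \<longrightarrow>
       measure_pmf.prob (pmf_of_set (decks m n))
         {\<pi>. real (Y_crit \<epsilon> m n i (full_hist G m n \<pi>)) >
              (1 + 4 * \<epsilon>) * real (b_crit \<epsilon> m n i (full_hist G m n \<pi>)) / real n
              + \<epsilon>^2 * real m}
       \<le> (2*\<epsilon>^2) * \<epsilon> powr (-2) * exp (- (\<epsilon>^3/1024) * \<epsilon>^4 * real m)"
  proof
    fix m :: nat
    show "\<exists>N::nat. \<forall>n\<ge>N. \<forall>(G::strategy) (i::nat).
       (\<forall>h. G h < n) \<longrightarrow> i < n \<longrightarrow>
       measure_pmf.prob (pmf_of_set (decks m n))
         {\<pi>. real (Y_crit \<epsilon> m n i (full_hist G m n \<pi>)) >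
              (1 + 4 * \<epsilon>) * real (b_crit \<epsilon> m n i (full_hist G m n \<pi>)) / real n
              + \<epsilon>^2 * real m}
       \<le> (2*\<epsilon>^2) * \<epsilon> powr (-2) * exp (- (\<epsilon>^3/1024) * \<epsilon>^4 * real m)"
      unfolding c1 c2 by (rule main_fixed_m[OF assms])
  qed
  have pos: "\<epsilon>^3/1024 > 0" "2*\<epsilon>^2 > 0" using assms by auto
  show ?thesis using H pos by blast
qed



end
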